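(* Let $X,Y,E,F$ be in Situation 1 or Situation 2 (see context), and suppose $Z(E)$ and $Z(F)$ are one-dimensional. If $T:A(X,E)\to A(Y,F)$ is a surjective linear isometry, then $T$ is biseparating.
   Context: $\mathbb K=\mathbb R$ or $\mathbb C$; $E,F$ are $\mathbb K$-Banach spaces. Situation 1: $X,Y$ realcompact completely regular, $E,F$ infinite-dimensional, $A(X,E)=C_b(X,E)$, $A(Y,F)=C_b(Y,F)$ (bounded continuous functions). Situation 2: $X,Y$ complete metric spaces, $A(X,E)=C_b^u(X,E)$, $A(Y,F)=C_b^u(Y,F)$ (bounded uniformly continuous functions). All carry the sup norm. For a Banach space $W$, ${\rm Ext}_W$ is the set of extreme points of the closed unit ball of $W'$. A continuous linear $S:W\to W$ is a multiplier if there is $a_S:{\rm Ext}_W\to\mathbb K$ with $p\circ S=a_S(p)p$ for all $p\in{\rm Ext}_W$; $R$ is an adjoint of the multiplier $S$ if $a_R=\overline{a_S}$; the centralizer $Z(W)$ is the set of multipliers having an adjoint; $Z(W)$ one-dimensional means $Z(W)=\mathbb K\,\mathrm{Id}_W$. The cozero set is $c(f)=\{x:f(x)\neq0\}$; $T$ is separating if additive and $c(Tf)\cap c(Tg)=\emptyset$ whenever $c(f)\cap c(g)=\emptyset$; biseparating if bijective with $T$ and $T^{-1}$ separating. *)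

theory Defs
  imports "HOL-Analysis.Analysis"
begin

text \<open>The scalar field K is modelled as a subset of the complex numbers: K = \<real> or K = UNIV.
A K-Banach space is a real Banach space (type class banach) together with a scalar
action sc of K which extends the real scalar multiplication and is absolutely homogeneous.\<close>

definition K_banach :: "complex set \<Rightarrow> (complex \<Rightarrow> 'e::banach \<Rightarrow> 'e) \<Rightarrow> bool" where
  "K_banach K sc \<longleftrightarrow>
     (\<forall>r x. sc (complex_of_real r) x = r *\<^sub>R x) \<and>
     (\<forall>a\<in>K. \<forall>b\<in>K. \<forall>x. sc (a * b) x = sc a (sc b x)) \<and>
     (\<forall>a\<in>K. \<forall>b\<in>K. \<forall>x. sc (a + b) x = sc a x + sc b x) \<and>
     (\<forall>a\<in>K. \<forall>x y. sc a (x + y) = sc a x + sc a y) \<and>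
     (\<forall>a\<in>K. \<forall>x. norm (sc a x) = cmod a * norm x)"

definition K_infinite_dim :: "complex set \<Rightarrow> (complex \<Rightarrow> 'e::banach \<Rightarrow> 'e) \<Rightarrow> bool" where
  "K_infinite_dim K sc \<longleftrightarrow>
     \<not> (\<exists>B. finite B \<and> (\<forall>x. \<exists>c. (\<forall>b\<in>B. c b \<in> K) \<and> x = (\<Sum>b\<in>B. sc (c b) b)))"

definition K_dual :: "complex set \<Rightarrow> (complex \<Rightarrow> 'e::banach \<Rightarrow> 'e) \<Rightarrow> ('e \<Rightarrow> complex) set" where
  "K_dual K sc = {p. (\<forall>x. p x \<in> K) \<and> (\<forall>x y. p (x + y) = p x + p y) \<and>
                     (\<forall>a\<in>K. \<forall>x. p (sc a x) = a * p x) \<and> (\<exists>C. \<forall>x. cmod (p x) \<le> C * norm x)}"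

definition K_dual_ball :: "complex set \<Rightarrow> (complex \<Rightarrow> 'e::banach \<Rightarrow> 'e) \<Rightarrow> ('e \<Rightarrow> complex) set" where
  "K_dual_ball K sc = {p \<in> K_dual K sc. \<forall>x. cmod (p x) \<le> norm x}"

definition Ext :: "complex set \<Rightarrow> (complex \<Rightarrow> 'e::banach \<Rightarrow> 'e) \<Rightarrow> ('e \<Rightarrow> complex) set" where
  "Ext K sc = {p \<in> K_dual_ball K sc.
       \<forall>q\<in>K_dual_ball K sc. \<forall>r\<in>K_dual_ball K sc. \<forall>t::real. 0 < t \<and> t < 1 \<and>
          p = (\<lambda>x. complex_of_real t * q x + complex_of_real (1 - t) * r x) \<longrightarrow> q = r}"

definition K_cont_linear :: "complex set \<Rightarrow> (complex \<Rightarrow> 'e::banach \<Rightarrow> 'e) \<Rightarrow>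
    (complex \<Rightarrow> 'f::banach \<Rightarrow> 'f) \<Rightarrow> ('e \<Rightarrow> 'f) \<Rightarrow> bool" where
  "K_cont_linear K sc sc' S \<longleftrightarrow> (\<forall>x y. S (x + y) = S x + S y) \<and>
      (\<forall>a\<in>K. \<forall>x. S (sc a x) = sc' a (S x)) \<and> (\<exists>C. \<forall>x. norm (S x) \<le> C * norm x)"

definition multiplier_with :: "complex set \<Rightarrow> (complex \<Rightarrow> 'e::banach \<Rightarrow> 'e) \<Rightarrow> ('e \<Rightarrow> 'e) \<Rightarrow>
    (('e \<Rightarrow> complex) \<Rightarrow> complex) \<Rightarrow> bool" where
  "multiplier_with K sc S a \<longleftrightarrow> K_cont_linear K sc sc S \<and>
      (\<forall>p\<in>Ext K sc. a p \<in> K \<and> p \<circ> S = (\<lambda>x. a p * p x))"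

definition centralizer :: "complex set \<Rightarrow> (complex \<Rightarrow> 'e::banach \<Rightarrow> 'e) \<Rightarrow> ('e \<Rightarrow> 'e) set" where
  "centralizer K sc = {S. \<exists>aS. multiplier_with K sc S aS \<and>
       (\<exists>R aR. multiplier_with K sc R aR \<and> (\<forall>p\<in>Ext K sc. aR p = cnj (aS p)))}"

definition centralizer_one_dim :: "complex set \<Rightarrow> (complex \<Rightarrow> 'e::banach \<Rightarrow> 'e) \<Rightarrow> bool" where
  "centralizer_one_dim K sc \<longleftrightarrow> centralizer K sc = {(\<lambda>x. sc c x) | c. c \<in> K}"

text \<open>The index set may be taken inside the set of real-valued functions on the points of X
(the evaluation map over C(X) works whenever some closed embedding exists).\<close>
definition realcompact :: "'a topology \<Rightarrow> bool" where
  "realcompact X \<longleftrightarrow> (\<exists>(I :: ('a \<Rightarrow> real) set) f. embedding_map X (powertop_real I) f \<and>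
       closedin (powertop_real I) (f ` topspace X))"

definition Cb :: "'x topology \<Rightarrow> ('x \<Rightarrow> 'e::banach) set" where
  "Cb X = {f. continuous_map X euclidean f \<and> bounded (f ` topspace X) \<and>
              (\<forall>x. x \<notin> topspace X \<longrightarrow> f x = 0)}"

definition Cbu :: "'x metric \<Rightarrow> ('x \<Rightarrow> 'e::banach) set" where
  "Cbu m = {f. uniformly_continuous_map m euclidean_metric f \<and> bounded (f ` mspace m) \<and>
              (\<forall>x. x \<notin> mspace m \<longrightarrow> f x = 0)}"

definition supnorm :: "'x topology \<Rightarrow> ('x \<Rightarrow> 'e::real_normed_vector) \<Rightarrow> real" where
  "supnorm X f = Sup (insert 0 ((\<lambda>x. norm (f x)) ` topspace X))"

definition cozero :: "'x topology \<Rightarrow> ('x \<Rightarrow> 'e::zero) \<Rightarrow> 'x set" where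
  "cozero X f = {x \<in> topspace X. f x \<noteq> 0}"

definition separating :: "'x topology \<Rightarrow> 'y topology \<Rightarrow> ('x \<Rightarrow> 'e::banach) set \<Rightarrow>
    (('x \<Rightarrow> 'e) \<Rightarrow> ('y \<Rightarrow> 'f::banach)) \<Rightarrow> bool" where
  "separating X Y A T \<longleftrightarrow> (\<forall>f\<in>A. \<forall>g\<in>A. T (\<lambda>x. f x + g x) = (\<lambda>y. T f y + T g y)) \<and>
      (\<forall>f\<in>A. \<forall>g\<in>A. cozero X f \<inter> cozero X g = {} \<longrightarrow> cozero Y (T f) \<inter> cozero Y (T g) = {})"

definition biseparating :: "'x topology \<Rightarrow> 'y topology \<Rightarrow> ('x \<Rightarrow> 'e::banach) set \<Rightarrow>
    ('y \<Rightarrow> 'f::banach) set \<Rightarrow> (('x \<Rightarrow> 'e) \<Rightarrow> ('y \<Rightarrow> 'f)) \<Rightarrow> bool" where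
  "biseparating X Y A B T \<longleftrightarrow> bij_betw T A B \<and> separating X Y A T \<and>
      separating Y X B (inv_into A T)"

end

theory Submission
  imports Defs
begin

definition goodG :: "'f::real_normed_vector \<Rightarrow> ('f \<times> real) set \<Rightarrow> bool" where
  "goodG w G \<longleftrightarrow> (\<forall>x a b. (x,a)\<in>G \<longrightarrow> (x,b)\<in>G \<longrightarrow> a = b) \<and>
     (\<forall>x a y b. (x,a)\<in>G \<longrightarrow> (y,b)\<in>G \<longrightarrow> (x+y,a+b)\<in>G) \<and>
     (\<forall>x a r. (x,a)\<in>G \<longrightarrow> (r *\<^sub>R x, r*a)\<in>G) \<and>
     (\<forall>x a. (x,a)\<in>G \<longrightarrow> a \<le> norm x) \<and> (w, norm w) \<in> G"

lemma goodG_base: "goodG w {(r *\<^sub>R w, r * norm w) | r. True}"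
proof -
  have 1: "a = b" if "(x,a) = (r *\<^sub>R w, r * norm w)" "(x,b) = (s *\<^sub>R w, s * norm w)" for x a b r s
  proof (cases "w = 0")
    case True then show ?thesis using that by auto
  next
    case False
    from that have "r *\<^sub>R w = s *\<^sub>R w" by auto
    then have "r = s" using False by (simp add: scaleR_cancel_right)
    then show ?thesis using that by auto
  qed
  have 2: "r * norm w \<le> norm (r *\<^sub>R w)" for r by (simp add: mult_right_mono)
  show ?thesis unfolding goodG_def
    apply (intro conjI allI impI)
    subgoal using 1 by blast
    subgoal for x a y b apply clarsimp apply (rule_tac x="r+ra" in exI) by (simp add: algebra_simps)
    subgoal for x a t apply clarsimp apply (rule_tac x="t*r" in exI) by simp
    subgoal using 2 by auto
    subgoal apply clarsimp apply (rule_tac x=1 in exI) by simp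
    done
qed

lemma goodG_chain:
  assumes "C \<in> chains {G. goodG w G}" "C \<noteq> {}"
  shows "goodG w (\<Union>C)"
proof -
  have ch: "\<And>G H. G\<in>C \<Longrightarrow> H\<in>C \<Longrightarrow> G \<subseteq> H \<or> H \<subseteq> G" and gd: "\<And>G. G\<in>C \<Longrightarrow> goodG w G"
    using assms unfolding chains_def chain_subset_def by auto
  show ?thesis unfolding goodG_def
  proof (intro conjI allI impI)
    fix x a b assume "(x,a)\<in>\<Union>C" "(x,b)\<in>\<Union>C"
    then obtain G H where "G\<in>C" "H\<in>C" "(x,a)\<in>G" "(x,b)\<in>H" by auto
    then have "(x,a)\<in>G \<and> (x,b)\<in>G \<and> G\<in>C \<or> (x,a)\<in>H \<and> (x,b)\<in>H \<and> H\<in>C" using ch[of G H] by blast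
    then show "a = b" using gd unfolding goodG_def by blast
  next
    fix x a y b assume "(x,a)\<in>\<Union>C" "(y,b)\<in>\<Union>C"
    then obtain G H where "G\<in>C" "H\<in>C" "(x,a)\<in>G" "(y,b)\<in>H" by auto
    then have "(x,a)\<in>G \<and> (y,b)\<in>G \<and> G\<in>C \<or> (x,a)\<in>H \<and> (y,b)\<in>H \<and> H\<in>C" using ch[of G H] by blast
    then show "(x+y,a+b)\<in>\<Union>C" using gd unfolding goodG_def by blast
  next
    fix x a r assume "(x,a)\<in>\<Union>C"
    then obtain G where "G\<in>C" "(x,a)\<in>G" by auto
    then show "(r *\<^sub>R x, r*a)\<in>\<Union>C" using gd[of G] unfolding goodG_def by blast
  next
    fix x a assume "(x,a)\<in>\<Union>C"
    then obtain G where "G\<in>C" "(x,a)\<in>G" by auto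
    then show "a \<le> norm x" using gd[of G] unfolding goodG_def by blast
  next
    obtain G where "G \<in> C" using assms by auto
    then show "(w, norm w) \<in> \<Union>C" using gd[of G] unfolding goodG_def by blast
  qed
qed

lemma goodG_extend:
  assumes g: "goodG w G" and x0: "x0 \<notin> Domain G"
  shows "\<exists>H. goodG w H \<and> G \<subseteq> H \<and> H \<noteq> G"
proof -
  have fnc: "\<And>x a b. (x,a)\<in>G \<Longrightarrow> (x,b)\<in>G \<Longrightarrow> a = b"
   and add: "\<And>x a y b. (x,a)\<in>G \<Longrightarrow> (y,b)\<in>G \<Longrightarrow> (x+y,a+b)\<in>G"
   and scl: "\<And>x a r. (x,a)\<in>G \<Longrightarrow> (r *\<^sub>R x, r*a)\<in>G"
   and dom: "\<And>x a. (x,a)\<in>G \<Longrightarrow> a \<le> norm x"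
   and wG: "(w, norm w) \<in> G" using g unfolding goodG_def by blast+
  define L where "L = {a - norm (y - x0) | y a. (y,a) \<in> G}"
  have key: "a - norm (y - x0) \<le> norm (z + x0) - b" if "(y,a)\<in>G" "(z,b)\<in>G" for y a z b
  proof -
    have "a + b \<le> norm (y + z)" using dom[OF add[OF that]] .
    also have "\<dots> = norm ((y - x0) + (z + x0))" by simp
    also have "\<dots> \<le> norm (y - x0) + norm (z + x0)" by (rule norm_triangle_ineq)
    finally show ?thesis by simp
  qed
  have Lne: "L \<noteq> {}" using wG unfolding L_def by blast
  have Lbdd: "bdd_above L" unfolding L_def bdd_above_def using key wG by blast
  define c where "c = Sup L"
  have c1: "a - norm (y - x0) \<le> c" if "(y,a)\<in>G" for y a
    unfolding c_def by (rule cSup_upper[OF _ Lbdd]) (use that L_def in blast)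
  have c2: "c \<le> norm (z + x0) - b" if "(z,b)\<in>G" for z b
    unfolding c_def by (rule cSup_least[OF Lne]) (use that key L_def in blast)
  define H where "H = {(y + t *\<^sub>R x0, a + t * c) | y a t. (y,a)\<in>G}"
  have GH: "G \<subseteq> H" unfolding H_def by force
  have zero: "(0,0) \<in> G" using scl[OF wG, of 0] by simp
  have x0H: "(x0, c) \<in> H" unfolding H_def using zero by force
  have HG: "H \<noteq> G" using x0H x0 by auto
  have goodH: "goodG w H" unfolding goodG_def
  proof (intro conjI allI impI)
    fix x a b assume xa: "(x,a)\<in>H" and xb: "(x,b)\<in>H"
    obtain y1 a1 t1 where h1: "(y1,a1)\<in>G" "x = y1 + t1 *\<^sub>R x0" "a = a1 + t1 * c"
      using xa unfolding H_def by blast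
    obtain y2 a2 t2 where h2: "(y2,a2)\<in>G" "x = y2 + t2 *\<^sub>R x0" "b = a2 + t2 * c"
      using xb unfolding H_def by blast
    note h = h1(1) h2(1) h1(2) h2(2) h1(3) h2(3)
    have "t1 = t2"
    proof (rule ccontr)
      assume ne: "t1 \<noteq> t2"
      have "(y1 + (-1) *\<^sub>R y2, a1 + (-1)*a2) \<in> G" using add[OF h(1) scl[OF h(2)]] .
      then have "((1/(t2-t1)) *\<^sub>R (y1 - y2), (1/(t2-t1)) * (a1 - a2)) \<in> G" using scl by fastforce
      moreover have "(1/(t2-t1)) *\<^sub>R (y1 - y2) = x0"
      proof -
        have "y1 - y2 = (t2 - t1) *\<^sub>R x0" using h(3,4) by (simp add: algebra_simps)
        then show ?thesis using ne by simp
      qed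
      ultimately show False using x0 by force
    qed
    then have "y1 = y2" using h by simp
    then show "a = b" using h fnc \<open>t1 = t2\<close> by metis
  next
    fix x a y b assume xa: "(x,a)\<in>H" and xb: "(y,b)\<in>H"
    obtain y1 a1 t1 where h1: "(y1,a1)\<in>G" "x = y1 + t1 *\<^sub>R x0" "a = a1 + t1 * c"
      using xa unfolding H_def by blast
    obtain y2 a2 t2 where h2: "(y2,a2)\<in>G" "y = y2 + t2 *\<^sub>R x0" "b = a2 + t2 * c"
      using xb unfolding H_def by blast
    note h = h1(1) h2(1) h1(2) h2(2) h1(3) h2(3)
    have "(x + y, a + b) = ((y1+y2) + (t1+t2) *\<^sub>R x0, (a1+a2) + (t1+t2)*c)"
      using h by (simp add: algebra_simps)
    then show "(x+y,a+b)\<in>H" unfolding H_def using add[OF h(1,2)] by blast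
  next
    fix x a r assume "(x,a)\<in>H"
    then obtain y1 a1 t1 where h: "(y1,a1)\<in>G" "x = y1 + t1 *\<^sub>R x0" "a = a1 + t1 * c"
      unfolding H_def by blast
    have "(r *\<^sub>R x, r * a) = (r *\<^sub>R y1 + (r*t1) *\<^sub>R x0, r*a1 + (r*t1)*c)"
      using h by (simp add: algebra_simps)
    then show "(r *\<^sub>R x, r*a)\<in>H" unfolding H_def using scl[OF h(1)] by blast
  next
    fix x a assume "(x,a)\<in>H"
    then obtain y1 a1 t where h: "(y1,a1)\<in>G" "x = y1 + t *\<^sub>R x0" "a = a1 + t * c"
      unfolding H_def by blast
    show "a \<le> norm x"
    proof (cases "t = 0")
      case True then show ?thesis using h dom by simp
    next
      case tne: False
      have gs: "((1/t) *\<^sub>R y1, (1/t) * a1) \<in> G" using scl[OF h(1)] .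
      show ?thesis
      proof (cases "t > 0")
        case True
        have "(1/t)*a1 + c \<le> norm ((1/t) *\<^sub>R y1 + x0)" using c2[OF scl[OF h(1), of "1/t"]]
          by (simp add: algebra_simps)
        hence "t * ((1/t)*a1 + c) \<le> t * norm ((1/t) *\<^sub>R y1 + x0)"
          using True by (simp add: mult_left_mono)
        also have "t * norm ((1/t) *\<^sub>R y1 + x0) = norm (t *\<^sub>R ((1/t) *\<^sub>R y1 + x0))" using True by simp
        also have "t *\<^sub>R ((1/t) *\<^sub>R y1 + x0) = x" using h True by (simp add: algebra_simps)
        finally show ?thesis using h True by (simp add: algebra_simps)
      next
        case False
        then have tn: "t < 0" using tne by simp
        define s where "s = -t"
        have sp: "s > 0" using tn s_def by simp
        have "(1/s)*a1 - norm ((1/s) *\<^sub>R y1 - x0) \<le> c" using c1[OF scl[OF h(1), of "1/s"]] by simp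
        hence "(1/s)*a1 - c \<le> norm ((1/s) *\<^sub>R y1 - x0)" by simp
        hence "s * ((1/s)*a1 - c) \<le> s * norm ((1/s) *\<^sub>R y1 - x0)"
          using sp by (simp add: mult_left_mono)
        also have "s * norm ((1/s) *\<^sub>R y1 - x0) = norm (s *\<^sub>R ((1/s) *\<^sub>R y1 - x0))" using sp by simp
        also have "s *\<^sub>R ((1/s) *\<^sub>R y1 - x0) = x" using h sp s_def by (simp add: algebra_simps)
        finally show ?thesis using h sp s_def by (simp add: algebra_simps)
      qed
    qed
  next
    show "(w, norm w) \<in> H" using GH wG by blast
  qed
  show ?thesis using goodH GH HG by blast
qed

lemma hahn_banach_norm:
  fixes w :: "'f::real_normed_vector"
  shows "\<exists>\<psi>. (\<forall>x y. \<psi> (x + y) = \<psi> x + \<psi> y) \<and> (\<forall>r x. \<psi> (r *\<^sub>R x) = r * \<psi> x) \<and>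
             (\<forall>x. \<bar>\<psi> x\<bar> \<le> norm x) \<and> \<psi> w = norm w"
proof -
  let ?A = "{G. goodG w G}"
  have "\<forall>C\<in>chains ?A. \<exists>U\<in>?A. \<forall>X\<in>C. X \<subseteq> U"
  proof
    fix C assume C: "C \<in> chains ?A"
    show "\<exists>U\<in>?A. \<forall>X\<in>C. X \<subseteq> U"
    proof (cases "C = {}")
      case True then show ?thesis using goodG_base[of w] by auto
    next
      case False then show ?thesis using goodG_chain[OF C False] by blast
    qed
  qed
  from Zorn_Lemma2[OF this] obtain M where M: "goodG w M" and mx: "\<And>X. goodG w X \<Longrightarrow> M \<subseteq> X \<Longrightarrow> X = M"
    by auto
  have D: "\<forall>x. \<exists>a. (x,a) \<in> M"
  proof (rule ccontr)
    assume "\<not> (\<forall>x. \<exists>a. (x,a) \<in> M)"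
    then obtain x0 where "x0 \<notin> Domain M" by auto
    from goodG_extend[OF M this] mx show False by blast
  qed
  have fnc: "\<And>x a b. (x,a)\<in>M \<Longrightarrow> (x,b)\<in>M \<Longrightarrow> a = b"
   and add: "\<And>x a y b. (x,a)\<in>M \<Longrightarrow> (y,b)\<in>M \<Longrightarrow> (x+y,a+b)\<in>M"
   and scl: "\<And>x a r. (x,a)\<in>M \<Longrightarrow> (r *\<^sub>R x, r*a)\<in>M"
   and dom: "\<And>x a. (x,a)\<in>M \<Longrightarrow> a \<le> norm x"
   and wM: "(w, norm w) \<in> M" using M unfolding goodG_def by blast+
  define \<psi> where "\<psi> x = (THE a. (x,a) \<in> M)" for x
  have psi: "(x, \<psi> x) \<in> M" for x
    unfolding \<psi>_def using D fnc by (metis theI)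
  have psi_eq: "(x,a) \<in> M \<Longrightarrow> \<psi> x = a" for x a using psi fnc by blast
  show ?thesis
  proof (intro exI conjI allI)
    fix x y show "\<psi> (x + y) = \<psi> x + \<psi> y" using psi_eq[OF add[OF psi psi]] .
  next
    fix r x show "\<psi> (r *\<^sub>R x) = r * \<psi> x" using psi_eq[OF scl[OF psi]] .
  next
    fix x
    have "\<psi> x \<le> norm x" using dom[OF psi] .
    moreover have "- \<psi> x \<le> norm x" using dom[OF scl[OF psi[of x], of "-1"]] by simp
    ultimately show "\<bar>\<psi> x\<bar> \<le> norm x" by simp
  next
    show "\<psi> w = norm w" using psi_eq[OF wM] .
  qed
qed

lemma K_real: "(K::complex set) = \<real> \<or> K = UNIV \<Longrightarrow> complex_of_real r \<in> K" by auto
lemma K_mult: "(K::complex set) = \<real> \<or> K = UNIV \<Longrightarrow> a \<in> K \<Longrightarrow> b \<in> K \<Longrightarrow> a * b \<in> K" by auto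
lemma K_add: "(K::complex set) = \<real> \<or> K = UNIV \<Longrightarrow> a \<in> K \<Longrightarrow> b \<in> K \<Longrightarrow> a + b \<in> K" by auto
lemma K_diff: "(K::complex set) = \<real> \<or> K = UNIV \<Longrightarrow> a \<in> K \<Longrightarrow> b \<in> K \<Longrightarrow> a - b \<in> K" by auto
lemma K_div: "(K::complex set) = \<real> \<or> K = UNIV \<Longrightarrow> a \<in> K \<Longrightarrow> b \<in> K \<Longrightarrow> a / b \<in> K" by (metis Reals_divide UNIV_I)
lemma K_cnj: "(K::complex set) = \<real> \<or> K = UNIV \<Longrightarrow> a \<in> K \<Longrightarrow> cnj a \<in> K" by (auto simp: Reals_cnj_iff)

lemma K_phase:
  assumes K: "K = \<real> \<or> K = UNIV" and z: "z \<in> K"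
  shows "\<exists>l\<in>K. cmod l \<le> 1 \<and> l * z = complex_of_real (cmod z)"
proof (cases "z = 0")
  case True then show ?thesis using K_real[OF K, of 0] by (intro bexI[of _ 0]) auto
next
  case False
  let ?l = "cnj z / complex_of_real (cmod z)"
  have "?l \<in> K" using K_div[OF K K_cnj[OF K z] K_real[OF K]] .
  moreover have "cmod ?l \<le> 1" using False by (simp add: norm_divide)
  moreover have "?l * z = complex_of_real (cmod z)"
  proof -
    have "cnj z * z = complex_of_real (cmod z)^2" by (metis complex_norm_square mult.commute of_real_power)
    then have "?l * z = complex_of_real (cmod z)^2 / complex_of_real (cmod z)" by (simp add: field_simps)
    then show ?thesis using False by (simp add: power2_eq_square)
  qed
  ultimately show ?thesis by blast
qed

locale KBan =
  fixes K :: "complex set" and sc :: "complex \<Rightarrow> 'f::banach \<Rightarrow> 'f"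
  assumes KB: "K_banach K sc" and K: "K = \<real> \<or> K = UNIV"
begin

lemma sc_real: "sc (complex_of_real r) x = r *\<^sub>R x" using KB unfolding K_banach_def by blast
lemma sc_mult: "a \<in> K \<Longrightarrow> b \<in> K \<Longrightarrow> sc (a * b) x = sc a (sc b x)" using KB unfolding K_banach_def by blast
lemma sc_addK: "a \<in> K \<Longrightarrow> b \<in> K \<Longrightarrow> sc (a + b) x = sc a x + sc b x" using KB unfolding K_banach_def by blast
lemma sc_add: "a \<in> K \<Longrightarrow> sc a (x + y) = sc a x + sc a y" using KB unfolding K_banach_def by blast
lemma sc_norm: "a \<in> K \<Longrightarrow> norm (sc a x) = cmod a * norm x" using KB unfolding K_banach_def by blast
lemma sc_0v: "a \<in> K \<Longrightarrow> sc a 0 = 0" using sc_add[of a 0 0] by simp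
lemma sc_neg: "a \<in> K \<Longrightarrow> sc a (- x) = - sc a x" using sc_add[of a x "-x"] sc_0v[of a]
  by (simp add: eq_neg_iff_add_eq_0 add.commute)
lemma sc_diff: "a \<in> K \<Longrightarrow> sc a (x - y) = sc a x - sc a y" using sc_add[of a x "-y"] sc_neg[of a y] by simp
lemma sc_one: "sc 1 x = x" using sc_real[of 1 x] by simp
lemma sc_zero: "sc 0 x = 0" using sc_real[of 0 x] by simp
lemma sc_comm: "a \<in> K \<Longrightarrow> b \<in> K \<Longrightarrow> sc a (sc b x) = sc b (sc a x)"
  using sc_mult[of a b x] sc_mult[of b a x] by (simp add: mult.commute)
lemma sc_scaleR: "a \<in> K \<Longrightarrow> sc a (r *\<^sub>R x) = r *\<^sub>R sc a x"
  using sc_comm[of a "complex_of_real r" x] K_real[OF K] by (simp add: sc_real)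
lemma sc_eq0: "a \<in> K \<Longrightarrow> sc a x = 0 \<longleftrightarrow> a = 0 \<or> x = 0"
  using sc_norm[of a x] by auto

end

definition bnd :: "'y topology \<Rightarrow> ('y \<Rightarrow> 'f::real_normed_vector) \<Rightarrow> bool" where
  "bnd Y u \<longleftrightarrow> (\<exists>C. \<forall>y\<in>topspace Y. norm (u y) \<le> C)"

definition Hm :: "'y topology \<Rightarrow> ('y \<Rightarrow> 'f::real_normed_vector) set \<Rightarrow> ('y \<Rightarrow> real) set" where
  "Hm Y B = {h. (\<forall>y. 0 \<le> h y \<and> h y \<le> 1) \<and> (\<forall>u\<in>B. (\<lambda>y. h y *\<^sub>R u y) \<in> B)}"

definition cst :: "'y topology \<Rightarrow> 'f::zero \<Rightarrow> 'y \<Rightarrow> 'f" where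
  "cst Y v = (\<lambda>y. if y \<in> topspace Y then v else 0)"

definition linB :: "complex set \<Rightarrow> (complex \<Rightarrow> 'f \<Rightarrow> 'f) \<Rightarrow> ('y \<Rightarrow> 'f::real_normed_vector) set \<Rightarrow>
   (('y \<Rightarrow> 'f) \<Rightarrow> complex) \<Rightarrow> bool" where
  "linB K sc B \<Psi> \<longleftrightarrow> (\<forall>u\<in>B. \<forall>v\<in>B. \<Psi> (\<lambda>y. u y + v y) = \<Psi> u + \<Psi> v) \<and>
      (\<forall>a\<in>K. \<forall>u\<in>B. \<Psi> (\<lambda>y. sc a (u y)) = a * \<Psi> u)"

definition ballB :: "complex set \<Rightarrow> (complex \<Rightarrow> 'f \<Rightarrow> 'f) \<Rightarrow> 'y topology \<Rightarrow> ('y \<Rightarrow> 'f::real_normed_vector) set \<Rightarrow>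
   (('y \<Rightarrow> 'f) \<Rightarrow> complex) set" where
  "ballB K sc Y B = {\<Phi>. linB K sc B \<Phi> \<and> (\<forall>u\<in>B. \<Phi> u \<in> K) \<and> (\<forall>u\<in>B. cmod (\<Phi> u) \<le> supnorm Y u)}"

definition ExtB :: "complex set \<Rightarrow> (complex \<Rightarrow> 'f \<Rightarrow> 'f) \<Rightarrow> 'y topology \<Rightarrow> ('y \<Rightarrow> 'f::real_normed_vector) set \<Rightarrow>
   (('y \<Rightarrow> 'f) \<Rightarrow> complex) set" where
  "ExtB K sc Y B = {\<Phi> \<in> ballB K sc Y B. \<forall>\<Psi>1\<in>ballB K sc Y B. \<forall>\<Psi>2\<in>ballB K sc Y B. \<forall>t::real.
      0 < t \<and> t < 1 \<and> (\<forall>u\<in>B. \<Phi> u = complex_of_real t * \<Psi>1 u + complex_of_real (1 - t) * \<Psi>2 u)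
      \<longrightarrow> (\<forall>u\<in>B. \<Psi>1 u = \<Psi>2 u)}"

lemma sn_least: "(\<And>y. y \<in> topspace Y \<Longrightarrow> norm (u y) \<le> c) \<Longrightarrow> 0 \<le> c \<Longrightarrow> supnorm Y u \<le> c"
  unfolding supnorm_def by (rule cSup_least) auto

lemma sn_bdd: assumes "bnd Y u" shows "bdd_above (insert 0 ((\<lambda>x. norm (u x)) ` topspace Y))"
proof -
  obtain C where C: "\<forall>y\<in>topspace Y. norm (u y) \<le> C" using assms unfolding bnd_def by blast
  show ?thesis unfolding bdd_above_def
    by (rule exI[of _ "max 0 C"]) (use C in \<open>auto simp: le_max_iff_disj\<close>)
qed

lemma sn_upper: "bnd Y u \<Longrightarrow> y \<in> topspace Y \<Longrightarrow> norm (u y) \<le> supnorm Y u"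
  unfolding supnorm_def by (rule cSup_upper[OF _ sn_bdd]) auto

lemma sn_nonneg: "bnd Y u \<Longrightarrow> 0 \<le> supnorm Y u"
  unfolding supnorm_def by (rule cSup_upper[OF _ sn_bdd]) auto

locale FS = KBan K sc for K :: "complex set" and sc :: "complex \<Rightarrow> 'f::banach \<Rightarrow> 'f" +
  fixes Y :: "'y topology" and B :: "('y \<Rightarrow> 'f) set"
  assumes B_bnd: "u \<in> B \<Longrightarrow> bnd Y u"
    and B_out: "u \<in> B \<Longrightarrow> y \<notin> topspace Y \<Longrightarrow> u y = 0"
    and B_add: "u \<in> B \<Longrightarrow> v \<in> B \<Longrightarrow> (\<lambda>y. u y + v y) \<in> B"
    and B_sc: "a \<in> K \<Longrightarrow> u \<in> B \<Longrightarrow> (\<lambda>y. sc a (u y)) \<in> B"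
    and B_cst: "cst Y (c::'f) \<in> B"
    and B_Hm: "u \<in> B \<Longrightarrow> n > 0 \<Longrightarrow> (\<lambda>y. min 1 (n * norm (u y))) \<in> Hm Y B"
begin

lemma B_zero: "(\<lambda>y. 0) \<in> B" using B_cst[of 0] unfolding cst_def by (simp add: if_distrib cong: if_cong)

lemma B_scR: "u \<in> B \<Longrightarrow> (\<lambda>y. r *\<^sub>R u y) \<in> B"
  using B_sc[OF K_real[OF K], of u r] by (simp add: sc_real)

lemma B_neg: "u \<in> B \<Longrightarrow> (\<lambda>y. - u y) \<in> B" using B_scR[of u "-1"] by simp

lemma B_diff: "u \<in> B \<Longrightarrow> v \<in> B \<Longrightarrow> (\<lambda>y. u y - v y) \<in> B"
  using B_add[OF _ B_neg[of v], of u] by simp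

lemma B_mul: "h \<in> Hm Y B \<Longrightarrow> u \<in> B \<Longrightarrow> (\<lambda>y. h y *\<^sub>R u y) \<in> B" unfolding Hm_def by blast

lemma Hm_range: "h \<in> Hm Y B \<Longrightarrow> 0 \<le> h y \<and> h y \<le> 1" unfolding Hm_def by blast

lemma Hm_compl: assumes "h \<in> Hm Y B" shows "(\<lambda>y. 1 - h y) \<in> Hm Y B"
proof -
  have "(\<lambda>y. (1 - h y) *\<^sub>R u y) \<in> B" if "u \<in> B" for u
  proof -
    have "(\<lambda>y. (1 - h y) *\<^sub>R u y) = (\<lambda>y. u y - h y *\<^sub>R u y)" by (rule ext) (simp add: scaleR_diff_left)
    then show ?thesis using B_diff[OF that B_mul[OF assms that]] by simp
  qed
  moreover have "0 \<le> 1 - h y \<and> 1 - h y \<le> 1" for y using Hm_range[OF assms, of y] by simp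
  ultimately show ?thesis unfolding Hm_def by blast
qed

lemma snu: "u \<in> B \<Longrightarrow> y \<in> topspace Y \<Longrightarrow> norm (u y) \<le> supnorm Y u" by (rule sn_upper[OF B_bnd])
lemma snn: "u \<in> B \<Longrightarrow> 0 \<le> supnorm Y u" by (rule sn_nonneg[OF B_bnd])

lemma sn_zero: assumes "u \<in> B" "supnorm Y u \<le> 0" shows "u = (\<lambda>y. 0)"
proof
  fix y show "u y = 0"
  proof (cases "y \<in> topspace Y")
    case True then show ?thesis using snu[OF assms(1) True] assms(2) by (meson norm_le_zero_iff order.trans)
  next
    case False show ?thesis by (rule B_out[OF assms(1) False])
  qed
qed

lemma lin_add: "linB K sc B \<Psi> \<Longrightarrow> u \<in> B \<Longrightarrow> v \<in> B \<Longrightarrow> \<Psi> (\<lambda>y. u y + v y) = \<Psi> u + \<Psi> v"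
  unfolding linB_def by blast
lemma lin_sc: "linB K sc B \<Psi> \<Longrightarrow> a \<in> K \<Longrightarrow> u \<in> B \<Longrightarrow> \<Psi> (\<lambda>y. sc a (u y)) = a * \<Psi> u"
  unfolding linB_def by blast
lemma lin_scR: "linB K sc B \<Psi> \<Longrightarrow> u \<in> B \<Longrightarrow> \<Psi> (\<lambda>y. r *\<^sub>R u y) = complex_of_real r * \<Psi> u"
  using lin_sc[OF _ K_real[OF K], of \<Psi> u r] by (simp add: sc_real)
lemma lin_zero: "linB K sc B \<Psi> \<Longrightarrow> \<Psi> (\<lambda>y. 0) = 0"
  using lin_scR[OF _ B_zero, of \<Psi> 0] by simp
lemma lin_diff: "linB K sc B \<Psi> \<Longrightarrow> u \<in> B \<Longrightarrow> v \<in> B \<Longrightarrow> \<Psi> (\<lambda>y. u y - v y) = \<Psi> u - \<Psi> v"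
  using lin_add[of \<Psi> "\<lambda>y. u y - v y" v] B_diff[of u v] by simp

lemma ball_lin: "\<Phi> \<in> ballB K sc Y B \<Longrightarrow> linB K sc B \<Phi>" unfolding ballB_def by blast
lemma ball_K: "\<Phi> \<in> ballB K sc Y B \<Longrightarrow> u \<in> B \<Longrightarrow> \<Phi> u \<in> K" unfolding ballB_def by blast
lemma ball_le: "\<Phi> \<in> ballB K sc Y B \<Longrightarrow> u \<in> B \<Longrightarrow> cmod (\<Phi> u) \<le> supnorm Y u" unfolding ballB_def by blast

lemma L_scale:
  assumes lin: "linB K sc B \<Psi>" and c: "0 \<le> c" and b: "\<And>u. u \<in> B \<Longrightarrow> supnorm Y u \<le> 1 \<Longrightarrow> cmod (\<Psi> u) \<le> c"
    and u: "u \<in> B"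
  shows "cmod (\<Psi> u) \<le> c * supnorm Y u"
proof (cases "supnorm Y u \<le> 0")
  case True
  then have "u = (\<lambda>y. 0)" using sn_zero u by blast
  then show ?thesis using lin_zero[OF lin] snn[OF u] c by simp
next
  case False
  define s where "s = supnorm Y u"
  have s: "s > 0" using False s_def by simp
  define u' where "u' = (\<lambda>y. (1/s) *\<^sub>R u y)"
  have u'B: "u' \<in> B" unfolding u'_def using B_scR[OF u] .
  have "supnorm Y u' \<le> 1" unfolding u'_def
  proof (rule sn_least)
    fix y assume "y \<in> topspace Y"
    then have "norm (u y) \<le> s" using snu[OF u] s_def by simp
    then show "norm ((1/s) *\<^sub>R u y) \<le> 1" using s by (simp add: divide_le_eq_1)
  qed simp
  then have "cmod (\<Psi> u') \<le> c" using b u'B by blast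
  moreover have "\<Psi> u' = complex_of_real (1/s) * \<Psi> u" unfolding u'_def using lin_scR[OF lin u] .
  ultimately have "cmod (\<Psi> u) / s \<le> c" using s by (simp add: norm_mult norm_divide)
  then show ?thesis using s s_def by (simp add: divide_le_eq mult.commute)
qed

lemma lin_M:
  assumes lin: "linB K sc B \<Psi>" and h: "h \<in> Hm Y B"
  shows "linB K sc B (\<lambda>u. \<Psi> (\<lambda>y. h y *\<^sub>R u y))"
  unfolding linB_def
proof (intro conjI ballI)
  fix u v assume u: "u \<in> B" and v: "v \<in> B"
  have "(\<lambda>y. h y *\<^sub>R (u y + v y)) = (\<lambda>y. h y *\<^sub>R u y + h y *\<^sub>R v y)" by (simp add: scaleR_right_distrib)
  then show "\<Psi> (\<lambda>y. h y *\<^sub>R (u y + v y)) = \<Psi> (\<lambda>y. h y *\<^sub>R u y) + \<Psi> (\<lambda>y. h y *\<^sub>R v y)"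
    using lin_add[OF lin B_mul[OF h u] B_mul[OF h v]] by simp
next
  fix a u assume a: "a \<in> K" and u: "u \<in> B"
  have "(\<lambda>y. h y *\<^sub>R sc a (u y)) = (\<lambda>y. sc a (h y *\<^sub>R u y))" using sc_scaleR[OF a] by simp
  then show "\<Psi> (\<lambda>y. h y *\<^sub>R sc a (u y)) = a * \<Psi> (\<lambda>y. h y *\<^sub>R u y)"
    using lin_sc[OF lin a B_mul[OF h u]] by simp
qed

lemma split_h: "(\<lambda>y. h y *\<^sub>R (u::'y\<Rightarrow>'f) y + (1 - h y) *\<^sub>R u y) = u"
  by (rule ext) (simp add: scaleR_diff_left)

lemma lin_split:
  assumes lin: "linB K sc B \<Psi>" and h: "h \<in> Hm Y B" and u: "u \<in> B"
  shows "\<Psi> u = \<Psi> (\<lambda>y. h y *\<^sub>R u y) + \<Psi> (\<lambda>y. (1 - h y) *\<^sub>R u y)"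
proof -
  have "\<Psi> (\<lambda>y. h y *\<^sub>R u y + (1 - h y) *\<^sub>R u y) = \<Psi> (\<lambda>y. h y *\<^sub>R u y) + \<Psi> (\<lambda>y. (1 - h y) *\<^sub>R u y)"
    using lin_add[OF lin B_mul[OF h u] B_mul[OF Hm_compl[OF h] u]] .
  then show ?thesis unfolding split_h .
qed

lemma L_pair:
  assumes P: "\<Psi> \<in> ballB K sc Y B" and h: "h \<in> Hm Y B" and u1: "u1 \<in> B" and u2: "u2 \<in> B"
    and n1: "supnorm Y u1 \<le> 1" and n2: "supnorm Y u2 \<le> 1"
  shows "cmod (\<Psi> (\<lambda>y. h y *\<^sub>R u1 y)) + cmod (\<Psi> (\<lambda>y. (1 - h y) *\<^sub>R u2 y)) \<le> 1"
proof -
  have lin: "linB K sc B \<Psi>" using ball_lin[OF P] .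
  have h': "(\<lambda>y. 1 - h y) \<in> Hm Y B" using Hm_compl[OF h] .
  let ?z1 = "\<Psi> (\<lambda>y. h y *\<^sub>R u1 y)" and ?z2 = "\<Psi> (\<lambda>y. (1 - h y) *\<^sub>R u2 y)"
  obtain l1 where l1: "l1 \<in> K" "cmod l1 \<le> 1" "l1 * ?z1 = complex_of_real (cmod ?z1)"
    using K_phase[OF K ball_K[OF P B_mul[OF h u1]]] by blast
  obtain l2 where l2: "l2 \<in> K" "cmod l2 \<le> 1" "l2 * ?z2 = complex_of_real (cmod ?z2)"
    using K_phase[OF K ball_K[OF P B_mul[OF h' u2]]] by blast
  define v1 where "v1 = (\<lambda>y. sc l1 (u1 y))"
  define v2 where "v2 = (\<lambda>y. sc l2 (u2 y))"
  have v1: "v1 \<in> B" unfolding v1_def using B_sc[OF l1(1) u1] .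
  have v2: "v2 \<in> B" unfolding v2_def using B_sc[OF l2(1) u2] .
  define w where "w = (\<lambda>y. h y *\<^sub>R v1 y + (1 - h y) *\<^sub>R v2 y)"
  have wB: "w \<in> B" unfolding w_def using B_add[OF B_mul[OF h v1] B_mul[OF h' v2]] .
  have "\<Psi> w = \<Psi> (\<lambda>y. h y *\<^sub>R v1 y) + \<Psi> (\<lambda>y. (1 - h y) *\<^sub>R v2 y)"
    unfolding w_def using lin_add[OF lin B_mul[OF h v1] B_mul[OF h' v2]] .
  also have "\<Psi> (\<lambda>y. h y *\<^sub>R v1 y) = l1 * ?z1"
    unfolding v1_def using lin_sc[OF lin_M[OF lin h] l1(1) u1] .
  also have "\<Psi> (\<lambda>y. (1 - h y) *\<^sub>R v2 y) = l2 * ?z2"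
    unfolding v2_def using lin_sc[OF lin_M[OF lin h'] l2(1) u2] .
  finally have Pw: "\<Psi> w = complex_of_real (cmod ?z1) + complex_of_real (cmod ?z2)" using l1 l2 by simp
  have Pw2: "cmod (\<Psi> w) = cmod ?z1 + cmod ?z2" unfolding Pw of_real_add[symmetric] norm_of_real by simp
  have "supnorm Y w \<le> 1" unfolding w_def
  proof (rule sn_least)
    fix y assume y: "y \<in> topspace Y"
    have hy: "0 \<le> h y" "h y \<le> 1" using Hm_range[OF h] by auto
    have a: "norm (v1 y) \<le> 1"
    proof -
      have "norm (u1 y) \<le> 1" using snu[OF u1 y] n1 by linarith
      then have "cmod l1 * norm (u1 y) \<le> 1" using l1(2) by (intro mult_le_one) auto
      then show ?thesis unfolding v1_def using sc_norm[OF l1(1), of "u1 y"] by simp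
    qed
    have b: "norm (v2 y) \<le> 1"
    proof -
      have "norm (u2 y) \<le> 1" using snu[OF u2 y] n2 by linarith
      then have "cmod l2 * norm (u2 y) \<le> 1" using l2(2) by (intro mult_le_one) auto
      then show ?thesis unfolding v2_def using sc_norm[OF l2(1), of "u2 y"] by simp
    qed
    have "norm (h y *\<^sub>R v1 y + (1 - h y) *\<^sub>R v2 y) \<le> norm (h y *\<^sub>R v1 y) + norm ((1 - h y) *\<^sub>R v2 y)"
      by (rule norm_triangle_ineq)
    also have "\<dots> = h y * norm (v1 y) + (1 - h y) * norm (v2 y)" using hy by simp
    finally have "norm (h y *\<^sub>R v1 y + (1 - h y) *\<^sub>R v2 y) \<le> h y * norm (v1 y) + (1 - h y) * norm (v2 y)" .
    also have "\<dots> \<le> h y * 1 + (1 - h y) * 1"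
      using hy a b by (intro add_mono mult_left_mono) simp_all
    finally show "norm (h y *\<^sub>R v1 y + (1 - h y) *\<^sub>R v2 y) \<le> 1" by simp
  qed simp
  then have "cmod (\<Psi> w) \<le> 1" using ball_le[OF P wB] by simp
  then show ?thesis using Pw2 by simp
qed

lemma ExtB_ball: "\<Phi> \<in> ExtB K sc Y B \<Longrightarrow> \<Phi> \<in> ballB K sc Y B" unfolding ExtB_def by blast

lemma ExtB_D:
  assumes "\<Phi> \<in> ExtB K sc Y B" "\<Psi>1 \<in> ballB K sc Y B" "\<Psi>2 \<in> ballB K sc Y B" "0 < t" "t < 1"
    "\<And>u. u \<in> B \<Longrightarrow> \<Phi> u = complex_of_real t * \<Psi>1 u + complex_of_real (1 - t) * \<Psi>2 u" "u \<in> B"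
  shows "\<Psi>1 u = \<Psi>2 u"
proof -
  have "\<forall>\<Psi>1\<in>ballB K sc Y B. \<forall>\<Psi>2\<in>ballB K sc Y B. \<forall>t::real.
      0 < t \<and> t < 1 \<and> (\<forall>u\<in>B. \<Phi> u = complex_of_real t * \<Psi>1 u + complex_of_real (1 - t) * \<Psi>2 u)
      \<longrightarrow> (\<forall>u\<in>B. \<Psi>1 u = \<Psi>2 u)" using assms(1) unfolding ExtB_def by blast
  then have "0 < t \<and> t < 1 \<and> (\<forall>u\<in>B. \<Phi> u = complex_of_real t * \<Psi>1 u + complex_of_real (1 - t) * \<Psi>2 u)
      \<longrightarrow> (\<forall>u\<in>B. \<Psi>1 u = \<Psi>2 u)" using assms(2,3) by blast
  then show ?thesis using assms(4-7) by blast
qed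

lemma L_normB:
  assumes E: "\<Phi> \<in> ExtB K sc Y B" and u0: "u0 \<in> B" "\<Phi> u0 \<noteq> 0" and e: "\<epsilon> > 0"
  shows "\<exists>u\<in>B. supnorm Y u \<le> 1 \<and> cmod (\<Phi> u) > 1 - \<epsilon>"
proof (rule ccontr)
  assume nt: "\<not> (\<exists>u\<in>B. supnorm Y u \<le> 1 \<and> cmod (\<Phi> u) > 1 - \<epsilon>)"
  define e where "e = min \<epsilon> (1/2)"
  have e0: "0 < e" "e < 1" using e e_def by auto
  have b: "cmod (\<Phi> u) \<le> 1 - e" if "u \<in> B" "supnorm Y u \<le> 1" for u
  proof -
    have "\<not> (supnorm Y u \<le> 1 \<and> cmod (\<Phi> u) > 1 - \<epsilon>)" using nt that(1) by blast
    then have "cmod (\<Phi> u) \<le> 1 - \<epsilon>" using that(2) by linarith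
    then show ?thesis using e_def by linarith
  qed
  have P: "\<Phi> \<in> ballB K sc Y B" using ExtB_ball[OF E] .
  have lin: "linB K sc B \<Phi>" using ball_lin[OF P] .
  have bb: "cmod (\<Phi> u) \<le> (1 - e) * supnorm Y u" if "u \<in> B" for u
    using L_scale[OF lin _ b that] e0 by simp
  define P1 where "P1 = (\<lambda>u. \<Phi> u / complex_of_real (1 - e))"
  define P2 where "P2 = (\<lambda>u::'y\<Rightarrow>'f. 0::complex)"
  have cm: "cmod (1 - complex_of_real e) = 1 - e"
  proof -
    have "cmod (complex_of_real (1 - e)) = 1 - e" using e0 by (simp only: norm_of_real)
    then show ?thesis by simp
  qed
  have P1b: "P1 \<in> ballB K sc Y B" unfolding ballB_def linB_def
  proof (intro CollectI conjI ballI)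
    fix u v assume "u \<in> B" "v \<in> B"
    then show "P1 (\<lambda>y. u y + v y) = P1 u + P1 v" unfolding P1_def using lin_add[OF lin] by (simp add: add_divide_distrib)
  next
    fix a u assume "a \<in> K" "u \<in> B"
    then show "P1 (\<lambda>y. sc a (u y)) = a * P1 u" unfolding P1_def using lin_sc[OF lin] by simp
  next
    fix u assume u: "u \<in> B"
    show "P1 u \<in> K" unfolding P1_def using K_div[OF K ball_K[OF P u] K_real[OF K]] .
    have "cmod (P1 u) = cmod (\<Phi> u) / (1 - e)" unfolding P1_def using e0 cm by (simp add: norm_divide)
    also have "\<dots> \<le> supnorm Y u" using bb[OF u] e0 by (simp add: divide_le_eq mult.commute)
    finally show "cmod (P1 u) \<le> supnorm Y u" .
  qed
  have P2b: "P2 \<in> ballB K sc Y B" unfolding ballB_def linB_def P2_def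
    using snn K_real[OF K, of 0] by simp
  have "\<forall>u\<in>B. \<Phi> u = complex_of_real (1 - e) * P1 u + complex_of_real (1 - (1 - e)) * P2 u"
    unfolding P1_def P2_def using e0 by (simp add: field_simps)
  then have "P1 u0 = P2 u0" using ExtB_D[OF E P1b P2b, of "1 - e" u0] e0 u0 by simp
  then have "\<Phi> u0 = 0" using e0 unfolding P1_def P2_def by simp
  then show False using u0 by simp
qed

end

context KBan begin

lemma dual_add: "p \<in> K_dual K sc \<Longrightarrow> p (x + y) = p x + p y" unfolding K_dual_def by blast
lemma dual_sc: "p \<in> K_dual K sc \<Longrightarrow> a \<in> K \<Longrightarrow> p (sc a x) = a * p x" unfolding K_dual_def by blast
lemma dual_K: "p \<in> K_dual K sc \<Longrightarrow> p x \<in> K" unfolding K_dual_def by blast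
lemma dual_scR: "p \<in> K_dual K sc \<Longrightarrow> p (r *\<^sub>R x) = complex_of_real r * p x"
  using dual_sc[OF _ K_real[OF K], of p r x] by (simp add: sc_real)
lemma dual_zero: "p \<in> K_dual K sc \<Longrightarrow> p 0 = 0" using dual_scR[of p 0 0] by simp
lemma dual_diff: "p \<in> K_dual K sc \<Longrightarrow> p (x - y) = p x - p y" using dual_add[of p "x - y" y] by simp

lemma dball_dual: "p \<in> K_dual_ball K sc \<Longrightarrow> p \<in> K_dual K sc" unfolding K_dual_ball_def by blast
lemma dball_le: "p \<in> K_dual_ball K sc \<Longrightarrow> cmod (p x) \<le> norm x" unfolding K_dual_ball_def by blast
lemma Ext_ball: "p \<in> Ext K sc \<Longrightarrow> p \<in> K_dual_ball K sc" unfolding Ext_def by blast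
lemma Ext_dual: "p \<in> Ext K sc \<Longrightarrow> p \<in> K_dual K sc" using Ext_ball dball_dual by blast

lemma Ext_D:
  assumes "p \<in> Ext K sc" "q \<in> K_dual_ball K sc" "r \<in> K_dual_ball K sc" "0 < t" "t < 1"
    "p = (\<lambda>x. complex_of_real t * q x + complex_of_real (1 - t) * r x)"
  shows "q = r"
proof -
  have "\<forall>q\<in>K_dual_ball K sc. \<forall>r\<in>K_dual_ball K sc. \<forall>t::real. 0 < t \<and> t < 1 \<and>
          p = (\<lambda>x. complex_of_real t * q x + complex_of_real (1 - t) * r x) \<longrightarrow> q = r"
    using assms(1) unfolding Ext_def by blast
  then have "0 < t \<and> t < 1 \<and> p = (\<lambda>x. complex_of_real t * q x + complex_of_real (1 - t) * r x) \<longrightarrow> q = r"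
    using assms(2,3) by blast
  then show ?thesis using assms(4-6) by blast
qed

lemma dball_intro:
  assumes "\<And>x. p x \<in> K" "\<And>x y. p (x + y) = p x + p y" "\<And>a x. a \<in> K \<Longrightarrow> p (sc a x) = a * p x"
    "\<And>x. cmod (p x) \<le> norm x"
  shows "p \<in> K_dual_ball K sc"
proof -
  have "p \<in> K_dual K sc" unfolding K_dual_def
    using assms by (intro CollectI conjI allI ballI exI[of _ 1]) auto
  then show ?thesis unfolding K_dual_ball_def using assms(4) by blast
qed

lemma L_normF_stop: "True" by simp
end
context KBan begin
lemma L_normF:
  assumes E: "p \<in> Ext K sc" and pn: "p w0 \<noteq> 0" and e: "\<epsilon> > 0"
  shows "\<exists>v. norm v \<le> 1 \<and> cmod (p v) > 1 - \<epsilon>"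
proof (rule ccontr)
  assume nt: "\<not> (\<exists>v. norm v \<le> 1 \<and> cmod (p v) > 1 - \<epsilon>)"
  define e where "e = min \<epsilon> (1/2)"
  have e0: "0 < e" "e < 1" using e e_def by auto
  have D: "p \<in> K_dual K sc" using Ext_dual[OF E] .
  have b: "cmod (p v) \<le> 1 - e" if "norm v \<le> 1" for v
  proof -
    have "cmod (p v) \<le> 1 - \<epsilon>" using nt that by (meson not_less)
    then show ?thesis using e_def by linarith
  qed
  have bb: "cmod (p v) \<le> (1 - e) * norm v" for v
  proof (cases "v = 0")
    case True then show ?thesis using dual_zero[OF D] by simp
  next
    case False
    then have n: "norm v > 0" by simp
    have "cmod (p ((1 / norm v) *\<^sub>R v)) \<le> 1 - e" using b False by simp
    moreover have "p ((1 / norm v) *\<^sub>R v) = complex_of_real (1 / norm v) * p v" using dual_scR[OF D] .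
    ultimately have "cmod (p v) / norm v \<le> 1 - e" using n by (simp add: norm_mult norm_divide)
    then show ?thesis using n by (simp add: divide_le_eq mult.commute)
  qed
  have cm: "cmod (complex_of_real (1 - e)) = 1 - e" using e0 by (simp only: norm_of_real)
  define q where "q = (\<lambda>x. p x / complex_of_real (1 - e))"
  define r where "r = (\<lambda>x::'f. 0::complex)"
  have qb: "q \<in> K_dual_ball K sc"
  proof (rule dball_intro)
    fix x show "q x \<in> K" unfolding q_def using K_div[OF K dual_K[OF D] K_real[OF K]] .
  next
    fix x y show "q (x + y) = q x + q y" unfolding q_def using dual_add[OF D] by (simp add: add_divide_distrib)
  next
    fix a x assume "a \<in> K" then show "q (sc a x) = a * q x" unfolding q_def using dual_sc[OF D] by simp
  next
    fix x
    have "cmod (q x) = cmod (p x) / (1 - e)" unfolding q_def using e0 cm by (simp add: norm_divide del: of_real_diff)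
    also have "\<dots> \<le> norm x" using bb[of x] e0 by (simp add: divide_le_eq mult.commute)
    finally show "cmod (q x) \<le> norm x" .
  qed
  have rb: "r \<in> K_dual_ball K sc" by (rule dball_intro) (auto simp: r_def K_real[OF K, of 0, simplified])
  have "p = (\<lambda>x. complex_of_real (1 - e) * q x + complex_of_real (1 - (1 - e)) * r x)"
  proof
    fix x
    have nz: "complex_of_real (1 - e) \<noteq> 0" using e0 by simp
    show "p x = complex_of_real (1 - e) * q x + complex_of_real (1 - (1 - e)) * r x"
      unfolding q_def r_def using nz by (simp del: of_real_diff)
  qed
  then have "q = r" using Ext_D[OF E qb rb, of "1 - e"] e0 by simp
  then have "q w0 = r w0" by simp
  then have "p w0 / complex_of_real (1 - e) = 0" unfolding q_def r_def .
  moreover have "complex_of_real (1 - e) \<noteq> 0" using e0 by simp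
  ultimately have "p w0 = 0" by simp
  then show False using pn by simp
qed

end

context FS begin

lemma ball_div:
  assumes lin: "linB K sc B \<Psi>" and k: "\<And>u. u \<in> B \<Longrightarrow> \<Psi> u \<in> K" and c: "c > 0"
    and b: "\<And>u. u \<in> B \<Longrightarrow> cmod (\<Psi> u) \<le> c * supnorm Y u"
  shows "(\<lambda>u. \<Psi> u / complex_of_real c) \<in> ballB K sc Y B"
  unfolding ballB_def linB_def
proof (intro CollectI conjI ballI)
  fix u v assume "u \<in> B" "v \<in> B"
  then show "\<Psi> (\<lambda>y. u y + v y) / complex_of_real c = \<Psi> u / complex_of_real c + \<Psi> v / complex_of_real c"
    using lin_add[OF lin] by (simp add: add_divide_distrib)
next
  fix a u assume "a \<in> K" "u \<in> B"
  then show "\<Psi> (\<lambda>y. sc a (u y)) / complex_of_real c = a * (\<Psi> u / complex_of_real c)"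
    using lin_sc[OF lin] by simp
next
  fix u assume u: "u \<in> B"
  show "\<Psi> u / complex_of_real c \<in> K" using K_div[OF K k[OF u] K_real[OF K]] .
  have "cmod (\<Psi> u / complex_of_real c) = cmod (\<Psi> u) / c" using c by (simp add: norm_divide)
  also have "\<dots> \<le> supnorm Y u" using b[OF u] c by (simp add: divide_le_eq mult.commute)
  finally show "cmod (\<Psi> u / complex_of_real c) \<le> supnorm Y u" .
qed

lemma alg_lem: "(a::real) \<noteq> 0 \<Longrightarrow> a \<noteq> 1 \<Longrightarrow> z / complex_of_real a = (w - z) / complex_of_real (1 - a) \<Longrightarrow>
   z = complex_of_real a * w"
proof -
  assume a: "a \<noteq> 0" "a \<noteq> 1" and e: "z / complex_of_real a = (w - z) / complex_of_real (1 - a)"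
  have n1: "complex_of_real a \<noteq> 0" using a by simp
  have n2: "complex_of_real (1 - a) \<noteq> 0" using a by simp
  from e have "z * complex_of_real (1 - a) = (w - z) * complex_of_real a" using n1 n2
    by (simp add: divide_eq_eq eq_divide_eq del: of_real_diff)
  then show ?thesis by (simp add: algebra_simps)
qed

lemma sn_zero_fun: "supnorm Y (\<lambda>y. 0::'f) \<le> 1" by (rule sn_least) auto

lemma L_mult:
  assumes E: "\<Phi> \<in> ExtB K sc Y B" and h: "h \<in> Hm Y B"
  shows "\<exists>a::real. \<forall>u\<in>B. \<Phi> (\<lambda>y. h y *\<^sub>R u y) = complex_of_real a * \<Phi> u"
proof (cases "\<forall>u\<in>B. \<Phi> u = 0")
  case True
  then show ?thesis using B_mul[OF h] by (intro exI[of _ 0]) simp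
next
  case False
  then obtain u0 where u0: "u0 \<in> B" "\<Phi> u0 \<noteq> 0" by blast
  have P: "\<Phi> \<in> ballB K sc Y B" using ExtB_ball[OF E] .
  have lin: "linB K sc B \<Phi>" using ball_lin[OF P] .
  have h': "(\<lambda>y. 1 - h y) \<in> Hm Y B" using Hm_compl[OF h] .
  define N1 where "N1 = {cmod (\<Phi> (\<lambda>y. h y *\<^sub>R u y)) | u. u \<in> B \<and> supnorm Y u \<le> 1}"
  define N2 where "N2 = {cmod (\<Phi> (\<lambda>y. (1 - h y) *\<^sub>R u y)) | u. u \<in> B \<and> supnorm Y u \<le> 1}"
  have z1: "\<Phi> (\<lambda>y. h y *\<^sub>R (0::'f)) = 0" using lin_zero[OF lin] by simp
  have z2: "\<Phi> (\<lambda>y. (1 - h y) *\<^sub>R (0::'f)) = 0" using lin_zero[OF lin] by simp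
  have N1z: "0 \<in> N1" unfolding N1_def using B_zero sn_zero_fun z1 by force
  have N2z: "0 \<in> N2" unfolding N2_def using B_zero sn_zero_fun z2 by force
  have pair: "x1 + x2 \<le> 1" if hx1: "x1 \<in> N1" and hx2: "x2 \<in> N2" for x1 x2
  proof -
    obtain u1 where "u1 \<in> B" "supnorm Y u1 \<le> 1" "x1 = cmod (\<Phi> (\<lambda>y. h y *\<^sub>R u1 y))"
      using hx1 unfolding N1_def by blast
    moreover obtain u2 where "u2 \<in> B" "supnorm Y u2 \<le> 1" "x2 = cmod (\<Phi> (\<lambda>y. (1 - h y) *\<^sub>R u2 y))"
      using hx2 unfolding N2_def by blast
    ultimately show ?thesis using L_pair[OF P h] by blast
  qed
  have bd1: "bdd_above N1"
  proof (rule bdd_aboveI[of _ 1])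
    fix x assume "x \<in> N1" then show "x \<le> 1" using pair[OF _ N2z] by fastforce
  qed
  have bd2: "bdd_above N2"
  proof (rule bdd_aboveI[of _ 1])
    fix x assume "x \<in> N2" then show "x \<le> 1" using pair[OF N1z] by fastforce
  qed
  define \<alpha> where "\<alpha> = Sup N1"
  define \<beta> where "\<beta> = Sup N2"
  have a0: "\<alpha> \<ge> 0" unfolding \<alpha>_def using cSup_upper[OF N1z bd1] .
  have b0: "\<beta> \<ge> 0" unfolding \<beta>_def using cSup_upper[OF N2z bd2] .
  have ab1: "\<alpha> \<le> 1 - x2" if hx2: "x2 \<in> N2" for x2
    unfolding \<alpha>_def
  proof (rule cSup_least)
    show "N1 \<noteq> {}" using N1z by blast
    fix x assume "x \<in> N1" then show "x \<le> 1 - x2" using pair[OF _ hx2] by fastforce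
  qed
  have ab: "\<beta> \<le> 1 - \<alpha>"
    unfolding \<beta>_def
  proof (rule cSup_least)
    show "N2 \<noteq> {}" using N2z by blast
    fix x assume "x \<in> N2" then show "x \<le> 1 - \<alpha>" using ab1 by fastforce
  qed
  have bnd1: "cmod (\<Phi> (\<lambda>y. h y *\<^sub>R u y)) \<le> \<alpha> * supnorm Y u" if "u \<in> B" for u
  proof (rule L_scale[OF lin_M[OF lin h] a0 _ that])
    fix v assume "v \<in> B" "supnorm Y v \<le> 1"
    then have "cmod (\<Phi> (\<lambda>y. h y *\<^sub>R v y)) \<in> N1" unfolding N1_def by blast
    then show "cmod (\<Phi> (\<lambda>y. h y *\<^sub>R v y)) \<le> \<alpha>" unfolding \<alpha>_def using cSup_upper bd1 by blast
  qed
  have bnd2: "cmod (\<Phi> (\<lambda>y. (1 - h y) *\<^sub>R u y)) \<le> \<beta> * supnorm Y u" if "u \<in> B" for u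
  proof (rule L_scale[OF lin_M[OF lin h'] b0 _ that])
    fix v assume "v \<in> B" "supnorm Y v \<le> 1"
    then have "cmod (\<Phi> (\<lambda>y. (1 - h y) *\<^sub>R v y)) \<in> N2" unfolding N2_def by blast
    then show "cmod (\<Phi> (\<lambda>y. (1 - h y) *\<^sub>R v y)) \<le> \<beta>" unfolding \<beta>_def using cSup_upper bd2 by blast
  qed
  have ab2: "\<alpha> + \<beta> \<ge> 1"
  proof (rule ccontr)
    assume "\<not> \<alpha> + \<beta> \<ge> 1"
    then have "1 - (\<alpha> + \<beta>) > 0" by simp
    from L_normB[OF E u0 this] obtain u where u: "u \<in> B" "supnorm Y u \<le> 1" "cmod (\<Phi> u) > \<alpha> + \<beta>"
      by auto
    have "cmod (\<Phi> u) \<le> cmod (\<Phi> (\<lambda>y. h y *\<^sub>R u y)) + cmod (\<Phi> (\<lambda>y. (1 - h y) *\<^sub>R u y))"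
      unfolding lin_split[OF lin h u(1)] by (rule norm_triangle_ineq)
    also have "\<dots> \<le> \<alpha> * supnorm Y u + \<beta> * supnorm Y u" using bnd1[OF u(1)] bnd2[OF u(1)] by simp
    also have "\<dots> \<le> \<alpha> + \<beta>" using u(2) a0 b0 snn[OF u(1)]
      by (intro add_mono) (simp_all add: mult_left_le)
    finally show False using u(3) by simp
  qed
  have beq: "\<beta> = 1 - \<alpha>" using ab ab2 by simp
  consider "\<alpha> = 0" | "\<alpha> = 1" | "0 < \<alpha> \<and> \<alpha> < 1" using a0 beq b0 by linarith
  then show ?thesis
  proof cases
    case 1
    have "\<Phi> (\<lambda>y. h y *\<^sub>R u y) = 0" if "u \<in> B" for u using bnd1[OF that] 1 by simp
    then show ?thesis by (intro exI[of _ 0]) simp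
  next
    case 2
    have "\<Phi> (\<lambda>y. (1 - h y) *\<^sub>R u y) = 0" if "u \<in> B" for u using bnd2[OF that] 2 beq by simp
    then have "\<Phi> (\<lambda>y. h y *\<^sub>R u y) = \<Phi> u" if "u \<in> B" for u using lin_split[OF lin h that] that by simp
    then show ?thesis by (intro exI[of _ 1]) simp
  next
    case 3
    define P1 where "P1 = (\<lambda>u. \<Phi> (\<lambda>y. h y *\<^sub>R u y) / complex_of_real \<alpha>)"
    define P2 where "P2 = (\<lambda>u. \<Phi> (\<lambda>y. (1 - h y) *\<^sub>R u y) / complex_of_real (1 - \<alpha>))"
    have P1b: "P1 \<in> ballB K sc Y B" unfolding P1_def
      by (rule ball_div[OF lin_M[OF lin h] ball_K[OF P B_mul[OF h]] _ bnd1]) (use 3 in auto)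
    have P2b: "P2 \<in> ballB K sc Y B" unfolding P2_def
      by (rule ball_div[OF lin_M[OF lin h'] ball_K[OF P B_mul[OF h']]]) (use 3 bnd2 beq in auto)
    have dec: "\<Phi> u = complex_of_real \<alpha> * P1 u + complex_of_real (1 - \<alpha>) * P2 u" if "u \<in> B" for u
    proof -
      have "complex_of_real \<alpha> \<noteq> 0" "complex_of_real (1 - \<alpha>) \<noteq> 0" using 3 by auto
      then show ?thesis unfolding P1_def P2_def using lin_split[OF lin h that] by simp
    qed
    have "\<Phi> (\<lambda>y. h y *\<^sub>R u y) = complex_of_real \<alpha> * \<Phi> u" if u: "u \<in> B" for u
    proof -
      have "P1 u = P2 u" using ExtB_D[OF E P1b P2b _ _ dec u] 3 by blast
      moreover have "\<Phi> (\<lambda>y. (1 - h y) *\<^sub>R u y) = \<Phi> u - \<Phi> (\<lambda>y. h y *\<^sub>R u y)"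
        using lin_split[OF lin h u] by (simp del: scaleR_diff_left)
      ultimately have "\<Phi> (\<lambda>y. h y *\<^sub>R u y) / complex_of_real \<alpha> =
          (\<Phi> u - \<Phi> (\<lambda>y. h y *\<^sub>R u y)) / complex_of_real (1 - \<alpha>)"
        unfolding P1_def P2_def by (simp del: scaleR_diff_left of_real_diff)
      then show ?thesis using alg_lem[of \<alpha>] 3 by blast
    qed
    then show ?thesis by blast
  qed
qed

end

lemma real_le_inv_all: "(\<And>n::real. n > 0 \<Longrightarrow> x \<le> 1 / n) \<Longrightarrow> x \<le> 0"
proof (rule ccontr)
  assume a: "\<And>n::real. n > 0 \<Longrightarrow> x \<le> 1 / n" and "\<not> x \<le> 0"
  then have x: "x > 0" by simp
  have "x \<le> 1 / (2 / x)" using a[of "2/x"] x by simp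
  then show False using x by simp
qed

lemma min_bound: assumes "a \<ge> 0" "n > 0" shows "(1 - min 1 (n * a)) * a \<le> 1 / (n::real)"
proof (cases "n * a \<ge> 1")
  case True then show ?thesis using assms by simp
next
  case False
  then have "a < 1 / n" using assms by (simp add: field_simps)
  moreover have "(1 - n * a) * a \<le> a" using assms by (simp add: algebra_simps)
  ultimately show ?thesis using False by simp
qed

lemma cmod_re_eq: assumes "cmod z \<le> m" "Re z = m" shows "z = complex_of_real m"
proof -
  have "(cmod z)^2 = (Re z)^2 + (Im z)^2" by (rule cmod_power2)
  moreover have "(cmod z)^2 \<le> m^2" using assms norm_ge_zero power_mono by blast
  ultimately have "(Im z)^2 \<le> 0" using assms(2) by simp
  then have "Im z = 0" by simp
  then show ?thesis using assms(2) by (simp add: complex_eq_iff)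
qed

context FS begin

lemma cst_at: "y \<in> topspace Y \<Longrightarrow> cst Y (x::'f) y = x" unfolding cst_def by simp
lemma cst_add: "cst Y ((x::'f) + z) = (\<lambda>y. cst Y x y + cst Y z y)" unfolding cst_def by (rule ext) simp
lemma cst_sc: "a \<in> K \<Longrightarrow> cst Y (sc a x) = (\<lambda>y. sc a (cst Y x y))" unfolding cst_def using sc_0v by auto
lemma sn_cst: "supnorm Y (cst Y (x::'f)) \<le> norm x" by (rule sn_least) (auto simp: cst_def)

lemma L_step1:
  assumes P1: "\<Psi>1 \<in> ballB K sc Y B" and P2: "\<Psi>2 \<in> ballB K sc Y B" and t: "0 < t" "t < 1"
    and h: "h \<in> Hm Y B"
    and nrm: "\<And>\<epsilon>. \<epsilon> > 0 \<Longrightarrow> \<exists>v\<in>B. supnorm Y v \<le> 1 \<and>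
        cmod (complex_of_real t * \<Psi>1 (\<lambda>y. h y *\<^sub>R v y) + complex_of_real (1 - t) * \<Psi>2 (\<lambda>y. h y *\<^sub>R v y)) > 1 - \<epsilon>"
    and u: "u \<in> B"
  shows "\<Psi>1 (\<lambda>y. (1 - h y) *\<^sub>R u y) = 0"
proof (rule ccontr)
  assume ne: "\<Psi>1 (\<lambda>y. (1 - h y) *\<^sub>R u y) \<noteq> 0"
  have lin1: "linB K sc B \<Psi>1" using ball_lin[OF P1] .
  have h': "(\<lambda>y. 1 - h y) \<in> Hm Y B" using Hm_compl[OF h] .
  define s where "s = max 1 (supnorm Y u)"
  have s1: "s \<ge> 1" unfolding s_def by simp
  define u' where "u' = (\<lambda>y. (1/s) *\<^sub>R u y)"
  have u'B: "u' \<in> B" unfolding u'_def using B_scR[OF u] .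
  have u'n: "supnorm Y u' \<le> 1" unfolding u'_def
  proof (rule sn_least)
    fix y assume "y \<in> topspace Y"
    then have "norm (u y) \<le> s" using snu[OF u] s_def by (meson max.cobounded2 order_trans)
    then show "norm ((1/s) *\<^sub>R u y) \<le> 1" using s1 by (simp add: divide_le_eq_1)
  qed simp
  have eq: "\<Psi>1 (\<lambda>y. (1 - h y) *\<^sub>R u' y) = complex_of_real (1/s) * \<Psi>1 (\<lambda>y. (1 - h y) *\<^sub>R u y)"
    unfolding u'_def using lin_scR[OF lin_M[OF lin1 h'] u, of "1/s"] by simp
  define \<delta> where "\<delta> = cmod (\<Psi>1 (\<lambda>y. (1 - h y) *\<^sub>R u' y))"
  have d0: "\<delta> > 0" unfolding \<delta>_def eq using ne s1 by simp
  obtain v where v: "v \<in> B" "supnorm Y v \<le> 1"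
    and big: "cmod (complex_of_real t * \<Psi>1 (\<lambda>y. h y *\<^sub>R v y) + complex_of_real (1 - t) * \<Psi>2 (\<lambda>y. h y *\<^sub>R v y)) > 1 - t * \<delta>"
    using nrm[of "t * \<delta>"] t d0 by auto
  have a1: "cmod (\<Psi>1 (\<lambda>y. h y *\<^sub>R v y)) \<le> 1 - \<delta>"
    using L_pair[OF P1 h v(1) u'B v(2) u'n] unfolding \<delta>_def by simp
  have a2: "cmod (\<Psi>2 (\<lambda>y. h y *\<^sub>R v y)) \<le> 1"
    using L_pair[OF P2 h v(1) B_zero v(2) sn_zero_fun] lin_zero[OF ball_lin[OF P2]] by simp
  have "cmod (complex_of_real t * \<Psi>1 (\<lambda>y. h y *\<^sub>R v y) + complex_of_real (1 - t) * \<Psi>2 (\<lambda>y. h y *\<^sub>R v y))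
      \<le> t * cmod (\<Psi>1 (\<lambda>y. h y *\<^sub>R v y)) + (1 - t) * cmod (\<Psi>2 (\<lambda>y. h y *\<^sub>R v y))"
  proof -
    have "cmod (complex_of_real t * \<Psi>1 (\<lambda>y. h y *\<^sub>R v y) + complex_of_real (1 - t) * \<Psi>2 (\<lambda>y. h y *\<^sub>R v y))
       \<le> cmod (complex_of_real t * \<Psi>1 (\<lambda>y. h y *\<^sub>R v y)) + cmod (complex_of_real (1 - t) * \<Psi>2 (\<lambda>y. h y *\<^sub>R v y))"
      by (rule norm_triangle_ineq)
    also have "\<dots> = t * cmod (\<Psi>1 (\<lambda>y. h y *\<^sub>R v y)) + (1 - t) * cmod (\<Psi>2 (\<lambda>y. h y *\<^sub>R v y))"
      using t by (simp add: norm_mult del: of_real_diff)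
    finally show ?thesis .
  qed
  also have "\<dots> \<le> t * (1 - \<delta>) + (1 - t) * 1"
    using a1 a2 t by (intro add_mono mult_left_mono) simp_all
  finally show False using big by (simp add: algebra_simps)
qed


lemma L_point_ext:
  assumes E: "p \<in> Ext K sc" and pn: "p w0 \<noteq> 0" and y0: "y0 \<in> topspace Y"
  shows "(\<lambda>u. p (u y0)) \<in> ExtB K sc Y B"
proof -
  have D: "p \<in> K_dual K sc" using Ext_dual[OF E] .
  have Db: "p \<in> K_dual_ball K sc" using Ext_ball[OF E] .
  have Pb: "(\<lambda>u. p (u y0)) \<in> ballB K sc Y B" unfolding ballB_def linB_def
  proof (intro CollectI conjI ballI)
    fix u v assume "u \<in> B" "v \<in> B"
    show "p (u y0 + v y0) = p (u y0) + p (v y0)" using dual_add[OF D] .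
  next
    fix a u assume "a \<in> K" "u \<in> B"
    then show "p (sc a (u y0)) = a * p (u y0)" using dual_sc[OF D] by blast
  next
    fix u assume u: "u \<in> B"
    show "p (u y0) \<in> K" using dual_K[OF D] .
    show "cmod (p (u y0)) \<le> supnorm Y u" using dball_le[OF Db] snu[OF u y0] order_trans by blast
  qed
  have ext: "\<forall>u\<in>B. \<Psi>1 u = \<Psi>2 u"
    if Q1: "\<Psi>1 \<in> ballB K sc Y B" and Q2: "\<Psi>2 \<in> ballB K sc Y B" and t: "0 < t" "t < 1"
      and H: "\<forall>u\<in>B. p (u y0) = complex_of_real t * \<Psi>1 u + complex_of_real (1 - t) * \<Psi>2 u"
    for \<Psi>1 \<Psi>2 t
  proof -
    have lin1: "linB K sc B \<Psi>1" using ball_lin[OF Q1] .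
    have lin2: "linB K sc B \<Psi>2" using ball_lin[OF Q2] .
    have nrm: "\<exists>v\<in>B. supnorm Y v \<le> 1 \<and>
        cmod (complex_of_real t * \<Psi>1 (\<lambda>y. h y *\<^sub>R v y) + complex_of_real (1 - t) * \<Psi>2 (\<lambda>y. h y *\<^sub>R v y)) > 1 - \<epsilon>"
      if h: "h \<in> Hm Y B" and hy: "h y0 = 1" and e: "\<epsilon> > 0" for h \<epsilon>
    proof -
      obtain w where w: "norm w \<le> 1" "cmod (p w) > 1 - \<epsilon>" using L_normF[OF E pn e] by blast
      have vB: "cst Y w \<in> B" using B_cst .
      have vn: "supnorm Y (cst Y w) \<le> 1" using sn_cst[of w] w(1) by simp
      have "p ((\<lambda>y. h y *\<^sub>R cst Y w y) y0) = complex_of_real t * \<Psi>1 (\<lambda>y. h y *\<^sub>R cst Y w y)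
          + complex_of_real (1 - t) * \<Psi>2 (\<lambda>y. h y *\<^sub>R cst Y w y)"
        using bspec[OF H B_mul[OF h vB]] by simp
      moreover have "(\<lambda>y. h y *\<^sub>R cst Y w y) y0 = w" using hy cst_at[OF y0] by simp
      ultimately show ?thesis using vB vn w(2) by (intro bexI[of _ "cst Y w"]) simp_all
    qed
    have st1: "\<Psi>1 (\<lambda>y. (1 - h y) *\<^sub>R u y) = 0 \<and> \<Psi>2 (\<lambda>y. (1 - h y) *\<^sub>R u y) = 0"
      if h: "h \<in> Hm Y B" and hy: "h y0 = 1" and u: "u \<in> B" for h u
    proof
      show "\<Psi>1 (\<lambda>y. (1 - h y) *\<^sub>R u y) = 0"
        by (rule L_step1[OF Q1 Q2 t h nrm[OF h hy] u])
    next
      have t': "0 < 1 - t" "1 - t < 1" using t by auto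
      have nrm': "\<exists>v\<in>B. supnorm Y v \<le> 1 \<and>
        cmod (complex_of_real (1 - t) * \<Psi>2 (\<lambda>y. h y *\<^sub>R v y) + complex_of_real (1 - (1 - t)) * \<Psi>1 (\<lambda>y. h y *\<^sub>R v y)) > 1 - \<epsilon>"
        if e: "\<epsilon> > 0" for \<epsilon>
      proof -
        obtain v where "v \<in> B" "supnorm Y v \<le> 1"
          "cmod (complex_of_real t * \<Psi>1 (\<lambda>y. h y *\<^sub>R v y) + complex_of_real (1 - t) * \<Psi>2 (\<lambda>y. h y *\<^sub>R v y)) > 1 - \<epsilon>"
          using nrm[OF h hy e] by blast
        then show ?thesis by (intro bexI[of _ v]) (simp_all add: add.commute)
      qed
      show "\<Psi>2 (\<lambda>y. (1 - h y) *\<^sub>R u y) = 0"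
        by (rule L_step1[OF Q2 Q1 t' h nrm' u])
    qed
    have st2: "cmod (\<Psi> u) \<le> 0" if Q: "\<Psi> \<in> ballB K sc Y B"
        and Qz: "\<And>h u. h \<in> Hm Y B \<Longrightarrow> h y0 = 1 \<Longrightarrow> u \<in> B \<Longrightarrow> \<Psi> (\<lambda>y. (1 - h y) *\<^sub>R u y) = 0"
        and u: "u \<in> B" and uz: "u y0 = 0" for \<Psi> u
    proof (rule real_le_inv_all)
      fix n :: real assume n: "n > 0"
      define g where "g = (\<lambda>y. min 1 (n * norm (u y)))"
      have g: "g \<in> Hm Y B" unfolding g_def using B_Hm[OF u n] .
      define h where "h = (\<lambda>y. 1 - g y)"
      have h: "h \<in> Hm Y B" unfolding h_def using Hm_compl[OF g] .
      have hy: "h y0 = 1" unfolding h_def g_def using uz by simp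
      have "\<Psi> u = \<Psi> (\<lambda>y. h y *\<^sub>R u y) + \<Psi> (\<lambda>y. (1 - h y) *\<^sub>R u y)"
        using lin_split[OF ball_lin[OF Q] h u] .
      also have "\<Psi> (\<lambda>y. (1 - h y) *\<^sub>R u y) = 0" using Qz[OF h hy u] .
      finally have eq: "\<Psi> u = \<Psi> (\<lambda>y. h y *\<^sub>R u y)" by simp
      have "supnorm Y (\<lambda>y. h y *\<^sub>R u y) \<le> 1 / n"
      proof (rule sn_least)
        fix y
        have "norm (h y *\<^sub>R u y) = (1 - min 1 (n * norm (u y))) * norm (u y)"
          unfolding h_def g_def by simp
        also have "\<dots> \<le> 1 / n" using min_bound[OF norm_ge_zero n] .
        finally show "norm (h y *\<^sub>R u y) \<le> 1 / n" .
      qed (use n in simp)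
      then show "cmod (\<Psi> u) \<le> 1 / n" using eq ball_le[OF Q B_mul[OF h u]] by simp
    qed
    have z1: "\<Psi>1 u = 0" if "u \<in> B" "u y0 = 0" for u
      using st2[OF Q1 _ that] st1 by simp
    have z2: "\<Psi>2 u = 0" if "u \<in> B" "u y0 = 0" for u
      using st2[OF Q2 _ that] st1 by simp
    define q1 where "q1 = (\<lambda>x. \<Psi>1 (cst Y x))"
    define q2 where "q2 = (\<lambda>x. \<Psi>2 (cst Y x))"
    have rep: "\<Psi> u = \<Psi> (cst Y (u y0))"
      if Q: "\<Psi> \<in> ballB K sc Y B" and Qz: "\<And>u. u \<in> B \<Longrightarrow> u y0 = 0 \<Longrightarrow> \<Psi> u = 0" and u: "u \<in> B" for \<Psi> u
    proof -
      have dB: "(\<lambda>y. u y - cst Y (u y0) y) \<in> B" using B_diff[OF u B_cst] .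
      have "(\<lambda>y. u y - cst Y (u y0) y) y0 = 0" using cst_at[OF y0] by simp
      then have "\<Psi> (\<lambda>y. u y - cst Y (u y0) y) = 0" using Qz[OF dB] by simp
      then show ?thesis using lin_diff[OF ball_lin[OF Q] u B_cst] by simp
    qed
    have qb: "(\<lambda>x. \<Psi> (cst Y x)) \<in> K_dual_ball K sc" if Q: "\<Psi> \<in> ballB K sc Y B" for \<Psi>
    proof (rule dball_intro)
      fix x show "\<Psi> (cst Y x) \<in> K" using ball_K[OF Q B_cst] .
    next
      fix x z show "\<Psi> (cst Y (x + z)) = \<Psi> (cst Y x) + \<Psi> (cst Y z)"
        unfolding cst_add using lin_add[OF ball_lin[OF Q] B_cst B_cst] .
    next
      fix a x assume a: "a \<in> K" show "\<Psi> (cst Y (sc a x)) = a * \<Psi> (cst Y x)"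
        unfolding cst_sc[OF a] using lin_sc[OF ball_lin[OF Q] a B_cst] .
    next
      fix x show "cmod (\<Psi> (cst Y x)) \<le> norm x" using ball_le[OF Q B_cst] sn_cst order_trans by blast
    qed
    have "p = (\<lambda>x. complex_of_real t * q1 x + complex_of_real (1 - t) * q2 x)"
    proof
      fix x
      have "p (cst Y x y0) = complex_of_real t * \<Psi>1 (cst Y x) + complex_of_real (1 - t) * \<Psi>2 (cst Y x)"
        using bspec[OF H B_cst] by simp
      then show "p x = complex_of_real t * q1 x + complex_of_real (1 - t) * q2 x"
        unfolding q1_def q2_def using cst_at[OF y0] by simp
    qed
    then have "q1 = q2" using Ext_D[OF E qb[OF Q1] qb[OF Q2] t] unfolding q1_def q2_def by blast
    then show ?thesis using rep[OF Q1 z1] rep[OF Q2 z2] unfolding q1_def q2_def by metis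
  qed
  have "(\<lambda>u. p (u y0)) \<in> ballB K sc Y B \<and> (\<forall>\<Psi>1\<in>ballB K sc Y B. \<forall>\<Psi>2\<in>ballB K sc Y B. \<forall>t::real.
      0 < t \<and> t < 1 \<and> (\<forall>u\<in>B. p (u y0) = complex_of_real t * \<Psi>1 u + complex_of_real (1 - t) * \<Psi>2 u)
      \<longrightarrow> (\<forall>u\<in>B. \<Psi>1 u = \<Psi>2 u))"
    using Pb ext by blast
  then show ?thesis unfolding ExtB_def by simp
qed

end

context KBan begin

lemma sc_diffK: "a \<in> K \<Longrightarrow> b \<in> K \<Longrightarrow> sc (a - b) x = sc a x - sc b x"
  using sc_addK[OF K_diff[OF K], of a b b x] by (simp add: algebra_simps)

lemma sc_inj: assumes "a \<in> K" "b \<in> K" "sc a w = sc b w" "w \<noteq> 0" shows "a = b"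
proof -
  have "sc (a - b) w = 0" using sc_diffK[OF assms(1,2)] assms(3) by simp
  then show ?thesis using sc_eq0[OF K_diff[OF K assms(1,2)]] assms(4) by simp
qed

lemma exists_functional:
  assumes w: "w \<noteq> 0"
  shows "\<exists>\<phi>. (\<forall>x. \<phi> x \<in> K) \<and> (\<forall>x y. \<phi> (x + y) = \<phi> x + \<phi> y) \<and> (\<forall>a\<in>K. \<forall>x. \<phi> (sc a x) = a * \<phi> x)
          \<and> (\<forall>x. cmod (\<phi> x) \<le> 2 * norm x) \<and> \<phi> w \<noteq> 0"
proof -
  obtain \<psi> where padd: "\<And>x y. \<psi> (x + y) = \<psi> x + \<psi> y" and pscl: "\<And>r x. \<psi> (r *\<^sub>R x) = r * \<psi> x"
    and pb: "\<And>x. \<bar>\<psi> x\<bar> \<le> norm x" and pw: "\<psi> w = norm w"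
    using hahn_banach_norm[of w] by blast
  have pneg: "\<psi> (- x) = - \<psi> x" for x using pscl[of "-1" x] by simp
  show ?thesis
  proof (cases "K = \<real>")
    case True
    define \<phi> where "\<phi> x = complex_of_real (\<psi> x)" for x
    show ?thesis
    proof (intro exI[of _ \<phi>] conjI allI ballI)
      fix x show "\<phi> x \<in> K" unfolding \<phi>_def True by simp
    next
      fix x y show "\<phi> (x + y) = \<phi> x + \<phi> y" unfolding \<phi>_def padd by simp
    next
      fix a x assume "a \<in> K"
      then obtain r where r: "a = complex_of_real r" using True Reals_cases by blast
      show "\<phi> (sc a x) = a * \<phi> x" unfolding \<phi>_def r sc_real pscl by simp
    next
      fix x show "cmod (\<phi> x) \<le> 2 * norm x" unfolding \<phi>_def using pb[of x] by simp
    next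
      show "\<phi> w \<noteq> 0" unfolding \<phi>_def pw using w by simp
    qed
  next
    case False
    then have KU: "K = UNIV" using K by blast
    define \<phi> where "\<phi> x = complex_of_real (\<psi> x) - \<i> * complex_of_real (\<psi> (sc \<i> x))" for x
    have ii: "sc \<i> (sc \<i> x) = - x" for x
    proof -
      have "sc \<i> (sc \<i> x) = sc (\<i> * \<i>) x" using sc_mult[of \<i> \<i> x] KU by simp
      also have "\<dots> = sc (complex_of_real (-1)) x" by simp
      also have "\<dots> = (-1) *\<^sub>R x" by (rule sc_real)
      finally show ?thesis by simp
    qed
    have dec: "sc a x = Re a *\<^sub>R x + sc \<i> (Im a *\<^sub>R x)" for a x
    proof -
      have "a = complex_of_real (Re a) + \<i> * complex_of_real (Im a)" by (simp add: complex_eq_iff)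
      then have "sc a x = sc (complex_of_real (Re a) + \<i> * complex_of_real (Im a)) x" by simp
      also have "\<dots> = sc (complex_of_real (Re a)) x + sc (\<i> * complex_of_real (Im a)) x"
        using sc_addK KU by simp
      also have "\<dots> = Re a *\<^sub>R x + sc \<i> (Im a *\<^sub>R x)" using sc_mult KU sc_real by simp
      finally show ?thesis .
    qed
    show ?thesis
    proof (intro exI[of _ \<phi>] conjI allI ballI)
      fix x show "\<phi> x \<in> K" using KU by simp
    next
      fix x y show "\<phi> (x + y) = \<phi> x + \<phi> y" unfolding \<phi>_def using sc_add[of \<i> x y] KU padd by (simp add: algebra_simps)
    next
      fix a x assume "a \<in> K"
      define r where "r = Re a"
      define s where "s = Im a"
      have a: "a = complex_of_real r + \<i> * complex_of_real s" unfolding r_def s_def by (simp add: complex_eq_iff)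
      have s1: "sc a x = r *\<^sub>R x + sc \<i> (s *\<^sub>R x)" using dec unfolding r_def s_def .
      have s2: "sc \<i> (sc a x) = r *\<^sub>R sc \<i> x - s *\<^sub>R x"
        unfolding s1 using sc_add[of \<i>] sc_scaleR[of \<i>] ii KU by simp
      have e1: "\<psi> (sc a x) = r * \<psi> x + s * \<psi> (sc \<i> x)"
        unfolding s1 padd pscl using sc_scaleR[of \<i>] KU pscl by simp
      have e2: "\<psi> (sc \<i> (sc a x)) = r * \<psi> (sc \<i> x) - s * \<psi> x"
        unfolding s2 using padd[of "r *\<^sub>R sc \<i> x" "- (s *\<^sub>R x)"] pneg pscl by simp
      have l: "\<phi> (sc a x) = complex_of_real (r * \<psi> x + s * \<psi> (sc \<i> x)) - \<i> * complex_of_real (r * \<psi> (sc \<i> x) - s * \<psi> x)"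
        unfolding \<phi>_def e1 e2 ..
      have rr: "a * \<phi> x = (complex_of_real r + \<i> * complex_of_real s) * (complex_of_real (\<psi> x) - \<i> * complex_of_real (\<psi> (sc \<i> x)))"
        unfolding \<phi>_def using a by simp
      show "\<phi> (sc a x) = a * \<phi> x" unfolding l rr by (simp add: algebra_simps complex_eq_iff)
    next
      fix x
      have "cmod (\<phi> x) \<le> cmod (complex_of_real (\<psi> x)) + cmod (\<i> * complex_of_real (\<psi> (sc \<i> x)))"
        unfolding \<phi>_def by (rule norm_triangle_ineq4)
      also have "\<dots> = \<bar>\<psi> x\<bar> + \<bar>\<psi> (sc \<i> x)\<bar>" by (simp add: norm_mult)
      also have "\<dots> \<le> norm x + norm (sc \<i> x)" using pb by (intro add_mono) auto
      also have "norm (sc \<i> x) = norm x" using sc_norm[of \<i> x] KU by simp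
      finally show "cmod (\<phi> x) \<le> 2 * norm x" by simp
    next
      have "Re (\<phi> w) = norm w" unfolding \<phi>_def pw by simp
      then show "\<phi> w \<noteq> 0" using w by auto
    qed
  qed
qed


lemma L_sep:
  assumes Z: "centralizer_one_dim K sc" and w: "w \<noteq> 0"
  shows "\<exists>p\<in>Ext K sc. p w \<noteq> 0"
proof (rule ccontr)
  assume nt: "\<not> (\<exists>p\<in>Ext K sc. p w \<noteq> 0)"
  then have pw0: "\<And>p. p \<in> Ext K sc \<Longrightarrow> p w = 0" by blast
  obtain \<phi> where fK: "\<And>x. \<phi> x \<in> K" and fadd: "\<And>x y. \<phi> (x + y) = \<phi> x + \<phi> y"
    and fsc: "\<And>a x. a \<in> K \<Longrightarrow> \<phi> (sc a x) = a * \<phi> x" and fb: "\<And>x. cmod (\<phi> x) \<le> 2 * norm x"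
    and fw: "\<phi> w \<noteq> 0"
    using exists_functional[OF w] by blast
  define U where "U x = sc (\<phi> x) w" for x
  have mU: "multiplier_with K sc U (\<lambda>p. 0)"
    unfolding multiplier_with_def K_cont_linear_def
  proof (intro conjI allI ballI)
    fix x y show "U (x + y) = U x + U y" unfolding U_def fadd using sc_addK[OF fK fK] .
  next
    fix a x assume a: "a \<in> K" show "U (sc a x) = sc a (U x)" unfolding U_def fsc[OF a] using sc_mult[OF a fK] .
  next
    show "\<exists>C. \<forall>x. norm (U x) \<le> C * norm x"
    proof (intro exI allI)
      fix x
      have "norm (U x) = cmod (\<phi> x) * norm w" unfolding U_def using sc_norm[OF fK] .
      also have "\<dots> \<le> (2 * norm x) * norm w" using fb by (intro mult_right_mono) auto
      finally show "norm (U x) \<le> (2 * norm w) * norm x" by (simp add: algebra_simps)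
    qed
  next
    fix p assume p: "p \<in> Ext K sc"
    show "(0::complex) \<in> K" using K_real[OF K, of 0] by simp
    show "p \<circ> U = (\<lambda>x. 0 * p x)"
    proof
      fix x show "(p \<circ> U) x = 0 * p x" unfolding U_def o_def using dual_sc[OF Ext_dual[OF p] fK] pw0[OF p] by simp
    qed
  qed
  have "U \<in> centralizer K sc" unfolding centralizer_def using mU by fastforce
  then obtain c where c: "c \<in> K" and Uc: "U = (\<lambda>x. sc c x)" using Z unfolding centralizer_one_dim_def by blast
  have Ux: "sc (\<phi> x) w = sc c x" for x using fun_cong[OF Uc, of x] unfolding U_def .
  have c0: "c \<noteq> 0"
  proof
    assume "c = 0"
    then have "sc (\<phi> w) w = 0" using Ux[of w] sc_zero by simp
    then show False using sc_eq0[OF fK] fw w by simp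
  qed
  define l where "l x = \<phi> x / c" for x
  have lK: "l x \<in> K" for x unfolding l_def using K_div[OF K fK c] .
  have xl: "x = sc (l x) w" for x
  proof -
    have "x = sc (1 / c * c) x" using c0 sc_one by simp
    also have "\<dots> = sc (1/c) (sc c x)" using sc_mult[OF K_div[OF K K_real[OF K, of 1] c] c] by simp
    also have "\<dots> = sc (1/c) (sc (\<phi> x) w)" using Ux by simp
    also have "\<dots> = sc (l x) w" unfolding l_def
      using sc_mult[OF K_div[OF K K_real[OF K, of 1] c] fK] by simp
    finally show ?thesis .
  qed
  have lw: "l w = 1"
  proof -
    have "sc (l w) w = sc 1 w" using xl[of w] sc_one by simp
    then show ?thesis using sc_inj[OF lK K_real[OF K, of 1]] w by simp
  qed
  have ladd: "l (x + y) = l x + l y" for x y unfolding l_def fadd by (simp add: add_divide_distrib)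
  have lsc: "a \<in> K \<Longrightarrow> l (sc a x) = a * l x" for a x unfolding l_def using fsc by simp
  define p0 where "p0 x = l x * complex_of_real (norm w)" for x
  have lnorm: "cmod (l x) * norm w = norm x" for x using sc_norm[OF lK, of x w] xl[of x] by simp
  have p0b: "p0 \<in> K_dual_ball K sc"
  proof (rule dball_intro)
    fix x show "p0 x \<in> K" unfolding p0_def using K_mult[OF K lK K_real[OF K]] .
  next
    fix x y show "p0 (x + y) = p0 x + p0 y" unfolding p0_def ladd by (simp add: algebra_simps)
  next
    fix a x assume "a \<in> K" then show "p0 (sc a x) = a * p0 x" unfolding p0_def using lsc by simp
  next
    fix x show "cmod (p0 x) \<le> norm x" unfolding p0_def using lnorm[of x] by (simp add: norm_mult)
  qed
  have p0E: "p0 \<in> Ext K sc" unfolding Ext_def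
  proof (intro CollectI conjI p0b ballI allI impI)
    fix q r and t :: real
    assume q: "q \<in> K_dual_ball K sc" and r: "r \<in> K_dual_ball K sc"
      and H: "0 < t \<and> t < 1 \<and> p0 = (\<lambda>x. complex_of_real t * q x + complex_of_real (1 - t) * r x)"
    have t: "0 < t" "t < 1" using H by auto
    have qx: "q x = l x * q w" for x using dual_sc[OF dball_dual[OF q] lK, of x w] xl[of x] by simp
    have rx: "r x = l x * r w" for x using dual_sc[OF dball_dual[OF r] lK, of x w] xl[of x] by simp
    have qn: "cmod (q w) \<le> norm w" using dball_le[OF q] .
    have rn: "cmod (r w) \<le> norm w" using dball_le[OF r] .
    have "p0 w = complex_of_real t * q w + complex_of_real (1 - t) * r w" using H by simp
    then have sum: "complex_of_real (norm w) = complex_of_real t * q w + complex_of_real (1 - t) * r w"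
      unfolding p0_def lw by simp
    have resum: "norm w = t * Re (q w) + (1 - t) * Re (r w)"
      using arg_cong[OF sum, of Re] by simp
    have rq: "Re (q w) \<le> norm w" using qn complex_Re_le_cmod order_trans by blast
    have rr: "Re (r w) \<le> norm w" using rn complex_Re_le_cmod order_trans by blast
    have "Re (q w) = norm w"
    proof (rule ccontr)
      assume "Re (q w) \<noteq> norm w"
      then have "Re (q w) < norm w" using rq by simp
      then have "t * Re (q w) < t * norm w" using t by simp
      moreover have "(1 - t) * Re (r w) \<le> (1 - t) * norm w" using rr t by (intro mult_left_mono) auto
      ultimately show False using resum by (simp add: algebra_simps)
    qed
    then have qw: "q w = complex_of_real (norm w)" using cmod_re_eq qn by blast
    have "Re (r w) = norm w"
    proof (rule ccontr)
      assume "Re (r w) \<noteq> norm w"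
      then have "Re (r w) < norm w" using rr by simp
      then have "(1 - t) * Re (r w) < (1 - t) * norm w" using t by simp
      moreover have "t * Re (q w) \<le> t * norm w" using rq t by (intro mult_left_mono) auto
      ultimately show False using resum by (simp add: algebra_simps)
    qed
    then have rw: "r w = complex_of_real (norm w)" using cmod_re_eq rn by blast
    show "q = r"
    proof
      fix x show "q x = r x" using qx rx qw rw by simp
    qed
  qed
  have "p0 w \<noteq> 0" unfolding p0_def lw using w by simp
  then show False using pw0[OF p0E] by simp
qed

end

context FS begin

lemma L_pointwise:
  assumes Z: "centralizer_one_dim K sc"
    and SB: "\<And>u. u \<in> B \<Longrightarrow> S u \<in> B"
    and Sadd: "\<And>u v. u \<in> B \<Longrightarrow> v \<in> B \<Longrightarrow> S (\<lambda>y. u y + v y) = (\<lambda>y. S u y + S v y)"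
    and Ssc: "\<And>a u. a \<in> K \<Longrightarrow> u \<in> B \<Longrightarrow> S (\<lambda>y. sc a (u y)) = (\<lambda>y. sc a (S u y))"
    and Sb: "\<And>u. u \<in> B \<Longrightarrow> supnorm Y (S u) \<le> C * supnorm Y u"
    and Sm: "\<And>\<Phi>. \<Phi> \<in> ExtB K sc Y B \<Longrightarrow> \<exists>a::real. \<forall>u\<in>B. \<Phi> (S u) = complex_of_real a * \<Phi> u"
    and y0: "y0 \<in> topspace Y"
  shows "\<exists>k\<in>K. \<forall>u\<in>B. S u y0 = sc k (u y0)"
proof -
  define Sy where "Sy x = S (cst Y x) y0" for x
  have coef: "\<exists>a::real. \<forall>u\<in>B. p (S u y0) = complex_of_real a * p (u y0)" if p: "p \<in> Ext K sc" for p
  proof (cases "\<exists>w0. p w0 \<noteq> 0")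
    case True
    then obtain w0 where "p w0 \<noteq> 0" by blast
    from Sm[OF L_point_ext[OF p this y0]] show ?thesis by simp
  next
    case False then show ?thesis by simp
  qed
  define aS where "aS p = complex_of_real (SOME a. \<forall>u\<in>B. p (S u y0) = complex_of_real a * p (u y0))" for p
  have aS: "\<forall>u\<in>B. p (S u y0) = aS p * p (u y0)" if p: "p \<in> Ext K sc" for p
    unfolding aS_def using someI_ex[OF coef[OF p]] .
  have aSr: "cnj (aS p) = aS p" for p unfolding aS_def by simp
  have aSK: "aS p \<in> K" for p unfolding aS_def using K_real[OF K] .
  have SyS: "Sy \<in> centralizer K sc"
  proof -
    have m: "multiplier_with K sc Sy aS"
      unfolding multiplier_with_def K_cont_linear_def
    proof (intro conjI allI ballI)
      fix x z show "Sy (x + z) = Sy x + Sy z" unfolding Sy_def cst_add Sadd[OF B_cst B_cst] by simp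
    next
      fix a x assume a: "a \<in> K" show "Sy (sc a x) = sc a (Sy x)" unfolding Sy_def cst_sc[OF a] Ssc[OF a B_cst] by simp
    next
      show "\<exists>C. \<forall>x. norm (Sy x) \<le> C * norm x"
      proof (intro exI allI)
        fix x
        have "norm (Sy x) \<le> supnorm Y (S (cst Y x))" unfolding Sy_def using snu[OF SB[OF B_cst] y0] .
        also have "\<dots> \<le> C * supnorm Y (cst Y x)" using Sb[OF B_cst] .
        also have "\<dots> \<le> max C 0 * supnorm Y (cst Y x)" using snn[OF B_cst] by (intro mult_right_mono) auto
        also have "\<dots> \<le> max C 0 * norm x" using sn_cst by (intro mult_left_mono) auto
        finally show "norm (Sy x) \<le> max C 0 * norm x" .
      qed
    next
      fix p assume p: "p \<in> Ext K sc"
      show "aS p \<in> K" using aSK .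
      show "p \<circ> Sy = (\<lambda>x. aS p * p x)"
      proof
        fix x show "(p \<circ> Sy) x = aS p * p x" unfolding Sy_def o_def using bspec[OF aS[OF p] B_cst] cst_at[OF y0] by simp
      qed
    qed
    have "\<forall>p\<in>Ext K sc. aS p = cnj (aS p)" using aSr by simp
    then show ?thesis unfolding centralizer_def using m by blast
  qed
  then obtain k where k: "k \<in> K" and Syk: "Sy = (\<lambda>x. sc k x)" using Z unfolding centralizer_one_dim_def by blast
  have aSk: "aS p * p x = k * p x" if p: "p \<in> Ext K sc" for p x
  proof -
    have "p (Sy x) = aS p * p x" unfolding Sy_def using bspec[OF aS[OF p] B_cst] cst_at[OF y0] by simp
    moreover have "p (Sy x) = k * p x" unfolding Syk using dual_sc[OF Ext_dual[OF p] k] .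
    ultimately show ?thesis by metis
  qed
  have "S u y0 = sc k (u y0)" if u: "u \<in> B" for u
  proof (rule ccontr)
    assume "S u y0 \<noteq> sc k (u y0)"
    then have "S u y0 - sc k (u y0) \<noteq> 0" by simp
    from L_sep[OF Z this] obtain p where p: "p \<in> Ext K sc" and pd: "p (S u y0 - sc k (u y0)) \<noteq> 0" by blast
    have D: "p \<in> K_dual K sc" using Ext_dual[OF p] .
    have "p (S u y0 - sc k (u y0)) = aS p * p (u y0) - k * p (u y0)"
      using dual_diff[OF D] dual_sc[OF D k] bspec[OF aS[OF p] u] by simp
    also have "\<dots> = 0" using aSk[OF p] by simp
    finally show False using pd by simp
  qed
  then show ?thesis using k by blast
qed

end

lemma main_sep:
  fixes scE :: "complex \<Rightarrow> 'e::banach \<Rightarrow> 'e" and scF :: "complex \<Rightarrow> 'f::banach \<Rightarrow> 'f"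
    and X :: "'x topology" and Y :: "'y topology" and T :: "('x \<Rightarrow> 'e) \<Rightarrow> ('y \<Rightarrow> 'f)"
  assumes FA: "FS K scE X A" and FB: "FS K scF Y B"
    and Z: "centralizer_one_dim K scF"
    and Tm: "\<And>f. f \<in> A \<Longrightarrow> T f \<in> B" and Ts: "T ` A = B"
    and Tadd: "\<And>f g. f \<in> A \<Longrightarrow> g \<in> A \<Longrightarrow> T (\<lambda>x. f x + g x) = (\<lambda>y. T f y + T g y)"
    and Thom: "\<And>a f. a \<in> K \<Longrightarrow> f \<in> A \<Longrightarrow> T (\<lambda>x. scE a (f x)) = (\<lambda>y. scF a (T f y))"
    and Tiso: "\<And>f. f \<in> A \<Longrightarrow> supnorm Y (T f) = supnorm X f"
    and f: "f \<in> A" and g: "g \<in> A" and disj: "cozero X f \<inter> cozero X g = {}"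
  shows "cozero Y (T f) \<inter> cozero Y (T g) = {}"
proof -
  interpret A: FS K scE X A by (rule FA)
  interpret B: FS K scF Y B by (rule FB)
  have Tdiff: "T (\<lambda>x. f1 x - f2 x) = (\<lambda>y. T f1 y - T f2 y)" if "f1 \<in> A" "f2 \<in> A" for f1 f2
  proof -
    have "T (\<lambda>x. (f1 x - f2 x) + f2 x) = (\<lambda>y. T (\<lambda>x. f1 x - f2 x) y + T f2 y)"
      using Tadd[OF A.B_diff[OF that] that(2)] .
    then have "T f1 = (\<lambda>y. T (\<lambda>x. f1 x - f2 x) y + T f2 y)" by simp
    then show ?thesis by (simp add: fun_eq_iff algebra_simps)
  qed
  have Tzero: "T (\<lambda>x. 0) = (\<lambda>y. 0)" using Tdiff[OF A.B_zero A.B_zero] by simp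
  have sn0: "supnorm Y (\<lambda>y. 0::'f) \<le> 0" by (rule sn_least) auto
  have Tinj: "inj_on T A"
  proof (rule inj_onI)
    fix f1 f2 assume a: "f1 \<in> A" "f2 \<in> A" "T f1 = T f2"
    have "supnorm X (\<lambda>x. f1 x - f2 x) = supnorm Y (T (\<lambda>x. f1 x - f2 x))" using Tiso[OF A.B_diff[OF a(1,2)]] by simp
    also have "\<dots> \<le> 0" unfolding Tdiff[OF a(1,2)] a(3) using sn0 by simp
    finally have "(\<lambda>x. f1 x - f2 x) = (\<lambda>x. 0)" using A.sn_zero[OF A.B_diff[OF a(1,2)]] by blast
    then show "f1 = f2" by (simp add: fun_eq_iff)
  qed
  define Ti where "Ti = inv_into A T"
  have uim: "u \<in> T ` A" if "u \<in> B" for u using that Ts by simp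
  have TiA: "Ti u \<in> A" if "u \<in> B" for u unfolding Ti_def by (rule inv_into_into[OF uim[OF that]])
  have TTi: "T (Ti u) = u" if "u \<in> B" for u unfolding Ti_def by (rule f_inv_into_f[OF uim[OF that]])
  have TiT: "Ti (T f1) = f1" if "f1 \<in> A" for f1 unfolding Ti_def by (rule inv_into_f_f[OF Tinj that])
  have Tiadd: "Ti (\<lambda>y. u y + v y) = (\<lambda>x. Ti u x + Ti v x)" if "u \<in> B" "v \<in> B" for u v
  proof -
    have "T (\<lambda>x. Ti u x + Ti v x) = (\<lambda>y. u y + v y)" using Tadd[OF TiA TiA] TTi that by simp
    then show ?thesis using TiT[OF A.B_add[OF TiA[OF that(1)] TiA[OF that(2)]]] by simp
  qed
  have Tisc: "Ti (\<lambda>y. scF a (u y)) = (\<lambda>x. scE a (Ti u x))" if "a \<in> K" "u \<in> B" for a u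
  proof -
    have "T (\<lambda>x. scE a (Ti u x)) = (\<lambda>y. scF a (u y))" using Thom[OF that(1) TiA[OF that(2)]] TTi[OF that(2)] by simp
    then show ?thesis using TiT[OF A.B_sc[OF that(1) TiA[OF that(2)]]] by simp
  qed
  have Tiiso: "supnorm X (Ti u) = supnorm Y u" if "u \<in> B" for u using Tiso[OF TiA[OF that]] TTi[OF that] by simp
  have transport: "(\<lambda>f. \<Phi> (T f)) \<in> ExtB K scE X A" if E: "\<Phi> \<in> ExtB K scF Y B" for \<Phi>
  proof -
    have P: "\<Phi> \<in> ballB K scF Y B" using B.ExtB_ball[OF E] .
    have lin: "linB K scF B \<Phi>" using B.ball_lin[OF P] .
    have Pb: "(\<lambda>f. \<Phi> (T f)) \<in> ballB K scE X A" unfolding ballB_def linB_def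
    proof (intro CollectI conjI ballI)
      fix u v assume "u \<in> A" "v \<in> A"
      then show "\<Phi> (T (\<lambda>y. u y + v y)) = \<Phi> (T u) + \<Phi> (T v)" using Tadd B.lin_add[OF lin Tm Tm] by simp
    next
      fix a u assume "a \<in> K" "u \<in> A"
      then show "\<Phi> (T (\<lambda>y. scE a (u y))) = a * \<Phi> (T u)" using Thom B.lin_sc[OF lin _ Tm] by simp
    next
      fix u assume u: "u \<in> A"
      show "\<Phi> (T u) \<in> K" using B.ball_K[OF P Tm[OF u]] .
      show "cmod (\<Phi> (T u)) \<le> supnorm X u" using B.ball_le[OF P Tm[OF u]] Tiso[OF u] by simp
    qed
    have ext: "\<forall>u\<in>A. \<Psi>1 u = \<Psi>2 u"
      if Q1: "\<Psi>1 \<in> ballB K scE X A" and Q2: "\<Psi>2 \<in> ballB K scE X A" and t: "0 < t" "t < 1"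
        and H: "\<forall>u\<in>A. \<Phi> (T u) = complex_of_real t * \<Psi>1 u + complex_of_real (1 - t) * \<Psi>2 u"
      for \<Psi>1 \<Psi>2 t
    proof -
      have tb: "(\<lambda>u. \<Psi> (Ti u)) \<in> ballB K scF Y B" if Q: "\<Psi> \<in> ballB K scE X A" for \<Psi>
        unfolding ballB_def linB_def
      proof (intro CollectI conjI ballI)
        fix u v assume "u \<in> B" "v \<in> B"
        then show "\<Psi> (Ti (\<lambda>y. u y + v y)) = \<Psi> (Ti u) + \<Psi> (Ti v)"
          using Tiadd A.lin_add[OF A.ball_lin[OF Q] TiA TiA] by simp
      next
        fix a u assume "a \<in> K" "u \<in> B"
        then show "\<Psi> (Ti (\<lambda>y. scF a (u y))) = a * \<Psi> (Ti u)"
          using Tisc A.lin_sc[OF A.ball_lin[OF Q] _ TiA] by simp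
      next
        fix u assume u: "u \<in> B"
        show "\<Psi> (Ti u) \<in> K" using A.ball_K[OF Q TiA[OF u]] .
        show "cmod (\<Psi> (Ti u)) \<le> supnorm Y u" using A.ball_le[OF Q TiA[OF u]] Tiiso[OF u] by simp
      qed
      have dec: "\<Phi> u = complex_of_real t * \<Psi>1 (Ti u) + complex_of_real (1 - t) * \<Psi>2 (Ti u)" if u: "u \<in> B" for u
        using bspec[OF H TiA[OF u]] TTi[OF u] by simp
      show ?thesis
      proof
        fix u assume u: "u \<in> A"
        have "\<Psi>1 (Ti (T u)) = \<Psi>2 (Ti (T u))"
          using B.ExtB_D[OF E tb[OF Q1] tb[OF Q2] t dec Tm[OF u]] .
        then show "\<Psi>1 u = \<Psi>2 u" using TiT[OF u] by simp
      qed
    qed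
    have "(\<lambda>f. \<Phi> (T f)) \<in> ballB K scE X A \<and> (\<forall>\<Psi>1\<in>ballB K scE X A. \<forall>\<Psi>2\<in>ballB K scE X A. \<forall>t::real.
      0 < t \<and> t < 1 \<and> (\<forall>u\<in>A. \<Phi> (T u) = complex_of_real t * \<Psi>1 u + complex_of_real (1 - t) * \<Psi>2 u)
      \<longrightarrow> (\<forall>u\<in>A. \<Psi>1 u = \<Psi>2 u))"
      using Pb ext by blast
    then show ?thesis unfolding ExtB_def by simp
  qed
  show ?thesis
  proof (rule ccontr)
    assume "cozero Y (T f) \<inter> cozero Y (T g) \<noteq> {}"
    then obtain y where y: "y \<in> topspace Y" and fy: "T f y \<noteq> 0" and gy: "T g y \<noteq> 0"
      unfolding cozero_def by blast
    have small: "norm (T f y) \<le> 1 / n" if n: "n > 0" for n :: real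
    proof -
      define h where "h = (\<lambda>x. min 1 (n * norm (f x)))"
      have h: "h \<in> Hm X A" unfolding h_def using A.B_Hm[OF f n] .
      define S where "S u = T (\<lambda>x. h x *\<^sub>R Ti u x)" for u
      have SB: "S u \<in> B" if "u \<in> B" for u unfolding S_def using Tm[OF A.B_mul[OF h TiA[OF that]]] .
      have Sadd: "S (\<lambda>y. u y + v y) = (\<lambda>y. S u y + S v y)" if "u \<in> B" "v \<in> B" for u v
      proof -
        have "(\<lambda>x. h x *\<^sub>R Ti (\<lambda>y. u y + v y) x) = (\<lambda>x. h x *\<^sub>R Ti u x + h x *\<^sub>R Ti v x)"
          unfolding Tiadd[OF that] by (simp add: scaleR_right_distrib)
        then show ?thesis unfolding S_def using Tadd[OF A.B_mul[OF h TiA[OF that(1)]] A.B_mul[OF h TiA[OF that(2)]]] by simp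
      qed
      have Ssc: "S (\<lambda>y. scF a (u y)) = (\<lambda>y. scF a (S u y))" if "a \<in> K" "u \<in> B" for a u
      proof -
        have "(\<lambda>x. h x *\<^sub>R Ti (\<lambda>y. scF a (u y)) x) = (\<lambda>x. scE a (h x *\<^sub>R Ti u x))"
          unfolding Tisc[OF that] using A.sc_scaleR[OF that(1)] by simp
        then show ?thesis unfolding S_def using Thom[OF that(1) A.B_mul[OF h TiA[OF that(2)]]] by simp
      qed
      have Sb: "supnorm Y (S u) \<le> 1 * supnorm Y u" if u: "u \<in> B" for u
      proof -
        have "supnorm Y (S u) = supnorm X (\<lambda>x. h x *\<^sub>R Ti u x)" unfolding S_def using Tiso[OF A.B_mul[OF h TiA[OF u]]] .
        also have "\<dots> \<le> supnorm X (Ti u)"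
        proof (rule sn_least)
          fix x assume x: "x \<in> topspace X"
          have "norm (h x *\<^sub>R Ti u x) = \<bar>h x\<bar> * norm (Ti u x)" by simp
          also have "\<dots> \<le> 1 * norm (Ti u x)" using A.Hm_range[OF h, of x] by (intro mult_right_mono) auto
          also have "\<dots> \<le> supnorm X (Ti u)" using A.snu[OF TiA[OF u] x] by simp
          finally show "norm (h x *\<^sub>R Ti u x) \<le> supnorm X (Ti u)" .
        qed (rule A.snn[OF TiA[OF u]])
        also have "\<dots> = supnorm Y u" using Tiiso[OF u] .
        finally show ?thesis by simp
      qed
      have Sm: "\<exists>a::real. \<forall>u\<in>B. \<Phi> (S u) = complex_of_real a * \<Phi> u" if E: "\<Phi> \<in> ExtB K scF Y B" for \<Phi>
      proof -
        obtain a :: real where a: "\<forall>w\<in>A. \<Phi> (T (\<lambda>x. h x *\<^sub>R w x)) = complex_of_real a * \<Phi> (T w)"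
          using A.L_mult[OF transport[OF E] h] by blast
        show ?thesis
        proof (intro exI ballI)
          fix u assume u: "u \<in> B"
          show "\<Phi> (S u) = complex_of_real a * \<Phi> u" unfolding S_def using bspec[OF a TiA[OF u]] TTi[OF u] by simp
        qed
      qed
      obtain k where k: "k \<in> K" and Sk: "\<forall>u\<in>B. S u y = scF k (u y)"
        using B.L_pointwise[OF Z SB Sadd Ssc Sb Sm y] by blast
      have hg: "(\<lambda>x. h x *\<^sub>R g x) = (\<lambda>x. 0)"
      proof
        fix x show "h x *\<^sub>R g x = 0"
        proof (cases "x \<in> topspace X \<and> g x \<noteq> 0")
          case True
          then have "f x = 0" using disj unfolding cozero_def by blast
          then show ?thesis unfolding h_def by simp
        next
          case False
          then have "g x = 0" using A.B_out[OF g] by blast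
          then show ?thesis by simp
        qed
      qed
      have "S (T g) = (\<lambda>y. 0)" unfolding S_def TiT[OF g] hg Tzero ..
      then have "scF k (T g y) = 0" using bspec[OF Sk Tm[OF g]] by simp
      then have k0: "k = 0" using B.sc_eq0[OF k] gy by simp
      have "T (\<lambda>x. h x *\<^sub>R f x) y = 0" using bspec[OF Sk Tm[OF f]] k0 B.sc_zero unfolding S_def TiT[OF f] by simp
      then have "norm (T f y) = norm (T f y - T (\<lambda>x. h x *\<^sub>R f x) y)" by simp
      also have "\<dots> = norm (T (\<lambda>x. f x - h x *\<^sub>R f x) y)" using Tdiff[OF f A.B_mul[OF h f]] by simp
      also have "\<dots> \<le> supnorm Y (T (\<lambda>x. f x - h x *\<^sub>R f x))" using B.snu[OF Tm[OF A.B_diff[OF f A.B_mul[OF h f]]] y] .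
      also have "\<dots> = supnorm X (\<lambda>x. f x - h x *\<^sub>R f x)" using Tiso[OF A.B_diff[OF f A.B_mul[OF h f]]] .
      also have "\<dots> \<le> 1 / n"
      proof (rule sn_least)
        fix x
        have "f x - h x *\<^sub>R f x = (1 - h x) *\<^sub>R f x" by (simp add: scaleR_diff_left)
        then have "norm (f x - h x *\<^sub>R f x) = (1 - min 1 (n * norm (f x))) * norm (f x)"
          unfolding h_def by simp
        also have "\<dots> \<le> 1 / n" using min_bound[OF norm_ge_zero n] .
        finally show "norm (f x - h x *\<^sub>R f x) \<le> 1 / n" .
      qed (use n in simp)
      finally show ?thesis .
    qed
    have "norm (T f y) \<le> 0" using real_le_inv_all small by blast
    then show False using fy by simp
  qed
qed

lemma cm_scaleR: "continuous_map X euclidean (h::'x\<Rightarrow>real) \<Longrightarrow> continuous_map X euclidean (w::'x\<Rightarrow>'f::real_normed_vector) \<Longrightarrow> continuous_map X euclidean (\<lambda>x. h x *\<^sub>R w x)"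
  unfolding continuous_map_atin limitin_canonical_iff by (auto intro: tendsto_scaleR)
lemma cm_blin: "bounded_linear L \<Longrightarrow> continuous_map X euclidean (w::'x\<Rightarrow>'f::real_normed_vector) \<Longrightarrow> continuous_map X euclidean (\<lambda>x. L (w x))"
  unfolding continuous_map_atin limitin_canonical_iff by (auto intro: bounded_linear.tendsto)

lemma bnd_bounded: "bnd Y u \<longleftrightarrow> bounded (u ` topspace Y)"
  unfolding bnd_def bounded_iff by auto

lemma ucm_iff: "uniformly_continuous_map m euclidean_metric f \<longleftrightarrow>
   (\<forall>\<epsilon>>0. \<exists>\<delta>>0. \<forall>x\<in>mspace m. \<forall>y\<in>mspace m. mdist m y x < \<delta> \<longrightarrow> dist (f y) (f x) < \<epsilon>)"
  unfolding uniformly_continuous_map_def by simp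

lemma (in KBan) sc_blin: "a \<in> K \<Longrightarrow> bounded_linear (sc a)"
  by (rule bounded_linear_intro[of _ "cmod a"]) (simp_all add: sc_add sc_scaleR sc_norm mult.commute)

lemma FS_Cb:
  fixes X :: "'x topology" and sc :: "complex \<Rightarrow> 'f::banach \<Rightarrow> 'f"
  assumes KBn: "KBan K sc"
  shows "FS K sc X (Cb X)"
proof -
  interpret KBan K sc by (rule KBn)
  show ?thesis
  proof (rule FS.intro[OF KBn], rule FS_axioms.intro)
    fix u :: "'x \<Rightarrow> 'f" assume "u \<in> Cb X" then show "bnd X u" unfolding Cb_def bnd_bounded by blast
  next
    fix u :: "'x \<Rightarrow> 'f" and y assume "u \<in> Cb X" "y \<notin> topspace X" then show "u y = 0" unfolding Cb_def by blast
  next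
    fix u v :: "'x \<Rightarrow> 'f" assume u: "u \<in> Cb X" and v: "v \<in> Cb X"
    obtain Cu where Cu: "\<forall>y\<in>topspace X. norm (u y) \<le> Cu" using u unfolding Cb_def bnd_bounded[symmetric] bnd_def by blast
    obtain Cv where Cv: "\<forall>y\<in>topspace X. norm (v y) \<le> Cv" using v unfolding Cb_def bnd_bounded[symmetric] bnd_def by blast
    have "bnd X (\<lambda>y. u y + v y)" unfolding bnd_def
      by (rule exI[of _ "Cu + Cv"]) (use Cu Cv in \<open>auto intro: norm_triangle_le add_mono\<close>)
    then show "(\<lambda>y. u y + v y) \<in> Cb X" using u v unfolding Cb_def bnd_bounded
      by (auto intro: continuous_map_add)
  next
    fix a and u :: "'x \<Rightarrow> 'f" assume a: "a \<in> K" and u: "u \<in> Cb X"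
    obtain Cu where Cu: "\<forall>y\<in>topspace X. norm (u y) \<le> Cu" using u unfolding Cb_def bnd_bounded[symmetric] bnd_def by blast
    have "bnd X (\<lambda>y. sc a (u y))" unfolding bnd_def
      by (rule exI[of _ "cmod a * Cu"]) (use Cu in \<open>auto simp: sc_norm[OF a] intro: mult_left_mono\<close>)
    moreover have "continuous_map X euclidean (\<lambda>y. sc a (u y))"
      using cm_blin[OF sc_blin[OF a]] u unfolding Cb_def by blast
    ultimately show "(\<lambda>y. sc a (u y)) \<in> Cb X" using u sc_0v[OF a] unfolding Cb_def bnd_bounded by auto
  next
    fix c :: 'f
    have "continuous_map X euclidean (cst X c)"
      by (rule continuous_map_eq[of _ _ "\<lambda>x. c"]) (auto simp: cst_def)
    moreover have "bnd X (cst X c)" unfolding bnd_def cst_def by (rule exI[of _ "norm c"]) auto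
    ultimately show "cst X c \<in> Cb X" unfolding Cb_def bnd_bounded by (auto simp: cst_def)
  next
    fix u :: "'x \<Rightarrow> 'f" and n :: real assume u: "u \<in> Cb X" and n: "n > 0"
    define h where "h = (\<lambda>y. min 1 (n * norm (u y)))"
    have hc: "continuous_map X euclidean h" unfolding h_def
      using u unfolding Cb_def
      by (intro continuous_map_real_min continuous_map_real_mult_left continuous_map_norm) auto
    have hr: "0 \<le> h y \<and> h y \<le> 1" for y unfolding h_def using n by simp
    have hw: "\<forall>w\<in>(Cb X :: ('x \<Rightarrow> 'f) set). (\<lambda>y. h y *\<^sub>R w y) \<in> Cb X"
    proof
      fix w :: "'x \<Rightarrow> 'f" assume w: "w \<in> Cb X"
      obtain Cw where Cw: "\<forall>y\<in>topspace X. norm (w y) \<le> Cw" using w unfolding Cb_def bnd_bounded[symmetric] bnd_def by blast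
      have "bnd X (\<lambda>y. h y *\<^sub>R w y)" unfolding bnd_def
      proof (rule exI[of _ Cw], intro ballI)
        fix y assume y: "y \<in> topspace X"
        have "norm (h y *\<^sub>R w y) = h y * norm (w y)" using hr[of y] by simp
        also have "\<dots> \<le> 1 * norm (w y)" using hr[of y] by (intro mult_right_mono) auto
        also have "\<dots> \<le> Cw" using Cw y by simp
        finally show "norm (h y *\<^sub>R w y) \<le> Cw" .
      qed
      moreover have "continuous_map X euclidean (\<lambda>y. h y *\<^sub>R w y)" using cm_scaleR[OF hc] w unfolding Cb_def by blast
      ultimately show "(\<lambda>y. h y *\<^sub>R w y) \<in> Cb X" using w unfolding Cb_def bnd_bounded by auto
    qed
    have "h \<in> Hm X (Cb X :: ('x \<Rightarrow> 'f) set)" unfolding Hm_def using hr hw by (intro CollectI conjI allI) auto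
    then show "(\<lambda>y. min 1 (n * norm (u y))) \<in> Hm X (Cb X :: ('x \<Rightarrow> 'f) set)" unfolding h_def .
  qed
qed

lemma min_lip: "\<bar>min 1 (n * a) - min 1 (n * b)\<bar> \<le> n * \<bar>a - b\<bar>" if "n > 0" for n a b :: real
proof -
  have "\<bar>min 1 (n * a) - min 1 (n * b)\<bar> \<le> \<bar>n * a - n * b\<bar>" by (auto simp: min_def abs_if)
  also have "\<dots> = n * \<bar>a - b\<bar>" using that by (simp add: abs_mult right_diff_distrib[symmetric])
  finally show ?thesis .
qed

lemma prod_bound:
  fixes wy wx :: "'f::real_normed_vector"
  assumes "\<bar>hy - hx\<bar> \<le> e1" "norm wy \<le> W" "\<bar>hx\<bar> \<le> 1" "0 \<le> W"
  shows "norm (hy *\<^sub>R wy - hx *\<^sub>R wx) \<le> e1 * W + norm (wy - wx)"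
proof -
  have "hy *\<^sub>R wy - hx *\<^sub>R wx = (hy - hx) *\<^sub>R wy + hx *\<^sub>R (wy - wx)" by (simp add: algebra_simps)
  then have "norm (hy *\<^sub>R wy - hx *\<^sub>R wx) \<le> \<bar>hy - hx\<bar> * norm wy + \<bar>hx\<bar> * norm (wy - wx)"
    by (metis norm_scaleR norm_triangle_ineq)
  also have "\<dots> \<le> e1 * W + 1 * norm (wy - wx)"
    using assms by (intro add_mono mult_mono) auto
  finally show ?thesis by simp
qed

lemma FS_Cbu:
  fixes m :: "'x metric" and sc :: "complex \<Rightarrow> 'f::banach \<Rightarrow> 'f"
  assumes KBn: "KBan K sc"
  shows "FS K sc (mtopology_of m) (Cbu m)"
proof -
  interpret KBan K sc by (rule KBn)
  have bndC: "\<exists>C. \<forall>y\<in>mspace m. norm (u y) \<le> C" if "u \<in> Cbu m" for u :: "'x \<Rightarrow> 'f"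
    using that unfolding Cbu_def bounded_iff by auto
  have ucD: "\<exists>\<delta>>0. \<forall>x\<in>mspace m. \<forall>y\<in>mspace m. mdist m y x < \<delta> \<longrightarrow> dist (u y) (u x) < \<epsilon>"
    if "u \<in> Cbu m" "\<epsilon> > 0" for u :: "'x \<Rightarrow> 'f" and \<epsilon>
    using that unfolding Cbu_def ucm_iff by blast
  show ?thesis
  proof (rule FS.intro[OF KBn], rule FS_axioms.intro)
    fix u :: "'x \<Rightarrow> 'f" assume "u \<in> Cbu m" then show "bnd (mtopology_of m) u" unfolding Cbu_def bnd_bounded by simp
  next
    fix u :: "'x \<Rightarrow> 'f" and y assume "u \<in> Cbu m" "y \<notin> topspace (mtopology_of m)" then show "u y = 0" unfolding Cbu_def by simp
  next
    fix u v :: "'x \<Rightarrow> 'f" assume u: "u \<in> Cbu m" and v: "v \<in> Cbu m"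
    obtain Cu where Cu: "\<forall>y\<in>mspace m. norm (u y) \<le> Cu" using bndC[OF u] by blast
    obtain Cv where Cv: "\<forall>y\<in>mspace m. norm (v y) \<le> Cv" using bndC[OF v] by blast
    have b: "bounded ((\<lambda>y. u y + v y) ` mspace m)" unfolding bounded_iff
      by (rule exI[of _ "Cu + Cv"]) (use Cu Cv in \<open>auto intro: norm_triangle_le add_mono\<close>)
    have "uniformly_continuous_map m euclidean_metric (\<lambda>y. u y + v y)" unfolding ucm_iff
    proof (intro allI impI)
      fix \<epsilon> :: real assume e: "\<epsilon> > 0"
      obtain d1 where d1: "d1 > 0" "\<forall>x\<in>mspace m. \<forall>y\<in>mspace m. mdist m y x < d1 \<longrightarrow> dist (u y) (u x) < \<epsilon>/2"
        using ucD[OF u, of "\<epsilon>/2"] e by auto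
      obtain d2 where d2: "d2 > 0" "\<forall>x\<in>mspace m. \<forall>y\<in>mspace m. mdist m y x < d2 \<longrightarrow> dist (v y) (v x) < \<epsilon>/2"
        using ucD[OF v, of "\<epsilon>/2"] e by auto
      show "\<exists>\<delta>>0. \<forall>x\<in>mspace m. \<forall>y\<in>mspace m. mdist m y x < \<delta> \<longrightarrow> dist (u y + v y) (u x + v x) < \<epsilon>"
      proof (intro exI[of _ "min d1 d2"] conjI ballI impI)
        fix x y assume x: "x \<in> mspace m" and y: "y \<in> mspace m" and d: "mdist m y x < min d1 d2"
        have "dist (u y + v y) (u x + v x) \<le> dist (u y) (u x) + dist (v y) (v x)" by (rule dist_triangle_add)
        also have "\<dots> < \<epsilon>/2 + \<epsilon>/2" using d1(2) d2(2) x y d by (intro add_strict_mono) auto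
        finally show "dist (u y + v y) (u x + v x) < \<epsilon>" by simp
      qed (use d1 d2 in simp)
    qed
    then show "(\<lambda>y. u y + v y) \<in> Cbu m" using u v b unfolding Cbu_def by simp
  next
    fix a and u :: "'x \<Rightarrow> 'f" assume a: "a \<in> K" and u: "u \<in> Cbu m"
    obtain Cu where Cu: "\<forall>y\<in>mspace m. norm (u y) \<le> Cu" using bndC[OF u] by blast
    have b: "bounded ((\<lambda>y. sc a (u y)) ` mspace m)" unfolding bounded_iff
      by (rule exI[of _ "cmod a * Cu"]) (use Cu in \<open>auto simp: sc_norm[OF a] intro: mult_left_mono\<close>)
    have "uniformly_continuous_map m euclidean_metric (\<lambda>y. sc a (u y))" unfolding ucm_iff
    proof (intro allI impI)
      fix \<epsilon> :: real assume e: "\<epsilon> > 0"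
      define e' where "e' = \<epsilon> / (cmod a + 1)"
      have ap: "cmod a + 1 > 0" by (metis add_pos_nonneg norm_ge_zero zero_less_one add.commute)
      have e': "e' > 0" unfolding e'_def using e ap by (rule divide_pos_pos)
      obtain d1 where d1: "d1 > 0" "\<forall>x\<in>mspace m. \<forall>y\<in>mspace m. mdist m y x < d1 \<longrightarrow> dist (u y) (u x) < e'"
        using ucD[OF u e'] by auto
      show "\<exists>\<delta>>0. \<forall>x\<in>mspace m. \<forall>y\<in>mspace m. mdist m y x < \<delta> \<longrightarrow> dist (sc a (u y)) (sc a (u x)) < \<epsilon>"
      proof (intro exI[of _ d1] conjI ballI impI)
        fix x y assume x: "x \<in> mspace m" and y: "y \<in> mspace m" and d: "mdist m y x < d1"
        have "dist (sc a (u y)) (sc a (u x)) = cmod a * dist (u y) (u x)"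
          unfolding dist_norm sc_diff[OF a, symmetric] sc_norm[OF a] ..
        also have "\<dots> \<le> cmod a * e'" using d1(2) x y d by (intro mult_left_mono) (auto intro: less_imp_le)
        also have "\<dots> < \<epsilon>"
        proof -
          have "cmod a * e' = \<epsilon> * (cmod a / (cmod a + 1))" unfolding e'_def by simp
          also have "\<dots> < \<epsilon> * 1" using e ap by (intro mult_strict_left_mono) auto
          finally show ?thesis by simp
        qed
        finally show "dist (sc a (u y)) (sc a (u x)) < \<epsilon>" .
      qed (use d1 in simp)
    qed
    then show "(\<lambda>y. sc a (u y)) \<in> Cbu m" using u b sc_0v[OF a] unfolding Cbu_def by simp
  next
    fix c :: 'f
    have "uniformly_continuous_map m euclidean_metric (cst (mtopology_of m) c)"
      by (rule uniformly_continuous_map_eq[of _ "\<lambda>x. c"]) (auto simp: cst_def uniformly_continuous_map_const)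
    moreover have "bounded (cst (mtopology_of m) c ` mspace m)" unfolding bounded_iff cst_def
      by (rule exI[of _ "norm c"]) auto
    ultimately show "cst (mtopology_of m) c \<in> Cbu m" unfolding Cbu_def by (auto simp: cst_def)
  next
    fix u :: "'x \<Rightarrow> 'f" and n :: real assume u: "u \<in> Cbu m" and n: "n > 0"
    define h where "h = (\<lambda>y. min 1 (n * norm (u y)))"
    have hr: "0 \<le> h y \<and> h y \<le> 1" for y unfolding h_def using n by simp
    have hl: "\<bar>h y - h x\<bar> \<le> n * dist (u y) (u x)" for x y
    proof -
      have "\<bar>h y - h x\<bar> \<le> n * \<bar>norm (u y) - norm (u x)\<bar>" unfolding h_def by (rule min_lip[OF n])
      also have "\<dots> \<le> n * dist (u y) (u x)" using n by (intro mult_left_mono) (auto simp: dist_norm norm_triangle_ineq3)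
      finally show ?thesis .
    qed
    have hw: "\<forall>w\<in>(Cbu m :: ('x \<Rightarrow> 'f) set). (\<lambda>y. h y *\<^sub>R w y) \<in> Cbu m"
    proof
      fix w :: "'x \<Rightarrow> 'f" assume w: "w \<in> Cbu m"
      obtain Cw0 where Cw0: "\<forall>y\<in>mspace m. norm (w y) \<le> Cw0" using bndC[OF w] by blast
      define Cw where "Cw = max 0 Cw0"
      have Cw: "\<forall>y\<in>mspace m. norm (w y) \<le> Cw" "Cw \<ge> 0" using Cw0 unfolding Cw_def by auto
      have b: "bounded ((\<lambda>y. h y *\<^sub>R w y) ` mspace m)" unfolding bounded_iff
      proof (rule exI[of _ Cw], intro ballI, elim imageE)
        fix z y assume z: "z = h y *\<^sub>R w y" and y: "y \<in> mspace m"
        have "norm (h y *\<^sub>R w y) = h y * norm (w y)" using hr[of y] by simp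
        also have "\<dots> \<le> 1 * norm (w y)" using hr[of y] by (intro mult_right_mono) auto
        also have "\<dots> \<le> Cw" using Cw y by simp
        finally show "norm z \<le> Cw" using z by simp
      qed
      have "uniformly_continuous_map m euclidean_metric (\<lambda>y. h y *\<^sub>R w y)" unfolding ucm_iff
      proof (intro allI impI)
        fix \<epsilon> :: real assume e: "\<epsilon> > 0"
        define e1 where "e1 = \<epsilon> / (2 * (n * Cw + 1))"
        have "n * Cw \<ge> 0" using n Cw(2) by simp
        then have pos: "n * Cw + 1 > 0" by linarith
        have e1: "e1 > 0" unfolding e1_def using e pos by simp
        obtain d1 where d1: "d1 > 0" "\<forall>x\<in>mspace m. \<forall>y\<in>mspace m. mdist m y x < d1 \<longrightarrow> dist (u y) (u x) < e1"
          using ucD[OF u e1] by auto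
        obtain d2 where d2: "d2 > 0" "\<forall>x\<in>mspace m. \<forall>y\<in>mspace m. mdist m y x < d2 \<longrightarrow> dist (w y) (w x) < \<epsilon>/2"
          using ucD[OF w, of "\<epsilon>/2"] e by auto
        show "\<exists>\<delta>>0. \<forall>x\<in>mspace m. \<forall>y\<in>mspace m. mdist m y x < \<delta> \<longrightarrow> dist (h y *\<^sub>R w y) (h x *\<^sub>R w x) < \<epsilon>"
        proof (intro exI[of _ "min d1 d2"] conjI ballI impI)
          fix x y assume x: "x \<in> mspace m" and y: "y \<in> mspace m" and d: "mdist m y x < min d1 d2"
          have du: "dist (u y) (u x) < e1" using d1(2) x y d by auto
          have dw: "dist (w y) (w x) < \<epsilon>/2" using d2(2) x y d by auto
          have "dist (h y *\<^sub>R w y) (h x *\<^sub>R w x) \<le> (n * dist (u y) (u x)) * Cw + norm (w y - w x)"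
            unfolding dist_norm[of "h y *\<^sub>R w y"]
            by (rule prod_bound[OF hl]) (use Cw y hr[of x] in auto)
          also have "\<dots> \<le> (n * e1) * Cw + norm (w y - w x)"
            using du n Cw(2) by (intro add_mono mult_right_mono mult_left_mono) auto
          also have "\<dots> < (n * e1) * Cw + \<epsilon>/2" using dw by (simp add: dist_norm)
          also have "(n * e1) * Cw \<le> \<epsilon>/2"
          proof -
            have "(n * e1) * Cw = \<epsilon> / 2 * ((n * Cw) / (n * Cw + 1))" unfolding e1_def using pos by (simp add: field_simps)
            also have "\<dots> \<le> \<epsilon> / 2 * 1" using e pos n Cw(2) by (intro mult_left_mono) auto
            finally show ?thesis by simp
          qed
          finally show "dist (h y *\<^sub>R w y) (h x *\<^sub>R w x) < \<epsilon>" by simp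
        qed (use d1 d2 in simp)
      qed
      then show "(\<lambda>y. h y *\<^sub>R w y) \<in> Cbu m" using w b unfolding Cbu_def by simp
    qed
    have "h \<in> Hm (mtopology_of m) (Cbu m :: ('x \<Rightarrow> 'f) set)" unfolding Hm_def using hr hw by (intro CollectI conjI allI) auto
    then show "(\<lambda>y. min 1 (n * norm (u y))) \<in> Hm (mtopology_of m) (Cbu m :: ('x \<Rightarrow> 'f) set)" unfolding h_def .
  qed
qed

lemma inv_facts:
  fixes scE :: "complex \<Rightarrow> 'e::banach \<Rightarrow> 'e" and scF :: "complex \<Rightarrow> 'f::banach \<Rightarrow> 'f"
    and X :: "'x topology" and Y :: "'y topology" and T :: "('x \<Rightarrow> 'e) \<Rightarrow> ('y \<Rightarrow> 'f)"
  assumes FA: "FS K scE X A" and FB: "FS K scF Y B"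
    and Tm: "\<And>f. f \<in> A \<Longrightarrow> T f \<in> B" and Ts: "T ` A = B"
    and Tadd: "\<And>f g. f \<in> A \<Longrightarrow> g \<in> A \<Longrightarrow> T (\<lambda>x. f x + g x) = (\<lambda>y. T f y + T g y)"
    and Thom: "\<And>a f. a \<in> K \<Longrightarrow> f \<in> A \<Longrightarrow> T (\<lambda>x. scE a (f x)) = (\<lambda>y. scF a (T f y))"
    and Tiso: "\<And>f. f \<in> A \<Longrightarrow> supnorm Y (T f) = supnorm X f"
  shows "inj_on T A \<and> (\<forall>u\<in>B. inv_into A T u \<in> A) \<and> inv_into A T ` B = A \<and>
    (\<forall>u\<in>B. \<forall>v\<in>B. inv_into A T (\<lambda>y. u y + v y) = (\<lambda>x. inv_into A T u x + inv_into A T v x)) \<and>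
    (\<forall>a\<in>K. \<forall>u\<in>B. inv_into A T (\<lambda>y. scF a (u y)) = (\<lambda>x. scE a (inv_into A T u x))) \<and>
    (\<forall>u\<in>B. supnorm X (inv_into A T u) = supnorm Y u)"
proof -
  interpret A: FS K scE X A by (rule FA)
  interpret B: FS K scF Y B by (rule FB)
  have Tdiff: "T (\<lambda>x. f1 x - f2 x) = (\<lambda>y. T f1 y - T f2 y)" if "f1 \<in> A" "f2 \<in> A" for f1 f2
  proof -
    have "T (\<lambda>x. (f1 x - f2 x) + f2 x) = (\<lambda>y. T (\<lambda>x. f1 x - f2 x) y + T f2 y)"
      using Tadd[OF A.B_diff[OF that] that(2)] .
    then have "T f1 = (\<lambda>y. T (\<lambda>x. f1 x - f2 x) y + T f2 y)" by simp
    then show ?thesis by (simp add: fun_eq_iff algebra_simps)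
  qed
  have sn0: "supnorm Y (\<lambda>y. 0::'f) \<le> 0" by (rule sn_least) auto
  have Tinj: "inj_on T A"
  proof (rule inj_onI)
    fix f1 f2 assume a: "f1 \<in> A" "f2 \<in> A" "T f1 = T f2"
    have "supnorm X (\<lambda>x. f1 x - f2 x) = supnorm Y (T (\<lambda>x. f1 x - f2 x))" using Tiso[OF A.B_diff[OF a(1,2)]] by simp
    also have "\<dots> \<le> 0" unfolding Tdiff[OF a(1,2)] a(3) using sn0 by simp
    finally have "(\<lambda>x. f1 x - f2 x) = (\<lambda>x. 0)" using A.sn_zero[OF A.B_diff[OF a(1,2)]] by blast
    then show "f1 = f2" by (simp add: fun_eq_iff)
  qed
  define Ti where "Ti = inv_into A T"
  have uim: "u \<in> T ` A" if "u \<in> B" for u using that Ts by simp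
  have TiA: "Ti u \<in> A" if "u \<in> B" for u unfolding Ti_def by (rule inv_into_into[OF uim[OF that]])
  have TTi: "T (Ti u) = u" if "u \<in> B" for u unfolding Ti_def by (rule f_inv_into_f[OF uim[OF that]])
  have TiT: "Ti (T f1) = f1" if "f1 \<in> A" for f1 unfolding Ti_def by (rule inv_into_f_f[OF Tinj that])
  have Tiim: "Ti ` B = A"
  proof
    show "Ti ` B \<subseteq> A" using TiA by blast
    show "A \<subseteq> Ti ` B"
    proof
      fix f1 assume "f1 \<in> A" then show "f1 \<in> Ti ` B" using TiT[of f1] Tm[of f1] by (metis image_eqI)
    qed
  qed
  have Tiadd: "Ti (\<lambda>y. u y + v y) = (\<lambda>x. Ti u x + Ti v x)" if "u \<in> B" "v \<in> B" for u v
  proof -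
    have "T (\<lambda>x. Ti u x + Ti v x) = (\<lambda>y. u y + v y)" using Tadd[OF TiA TiA] TTi that by simp
    then show ?thesis using TiT[OF A.B_add[OF TiA[OF that(1)] TiA[OF that(2)]]] by simp
  qed
  have Tisc: "Ti (\<lambda>y. scF a (u y)) = (\<lambda>x. scE a (Ti u x))" if "a \<in> K" "u \<in> B" for a u
  proof -
    have "T (\<lambda>x. scE a (Ti u x)) = (\<lambda>y. scF a (u y))" using Thom[OF that(1) TiA[OF that(2)]] TTi[OF that(2)] by simp
    then show ?thesis using TiT[OF A.B_sc[OF that(1) TiA[OF that(2)]]] by simp
  qed
  have Tiiso: "supnorm X (Ti u) = supnorm Y u" if "u \<in> B" for u using Tiso[OF TiA[OF that]] TTi[OF that] by simp
  show ?thesis unfolding Ti_def[symmetric] using Tinj TiA Tiim Tiadd Tisc Tiiso by blast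
qed

theorem proposition3p5:
  fixes K :: "complex set"
    and scE :: "complex \<Rightarrow> 'e::banach \<Rightarrow> 'e" and scF :: "complex \<Rightarrow> 'f::banach \<Rightarrow> 'f"
    and X :: "'x topology" and Y :: "'y topology"
    and AX :: "('x \<Rightarrow> 'e) set" and AY :: "('y \<Rightarrow> 'f) set"
    and T :: "('x \<Rightarrow> 'e) \<Rightarrow> ('y \<Rightarrow> 'f)"
  assumes K: "K = \<real> \<or> K = UNIV"
    and E: "K_banach K scE" and F: "K_banach K scF"
    and situation:
      "(completely_regular_space X \<and> realcompact X \<and> completely_regular_space Y \<and> realcompact Y \<and>
        K_infinite_dim K scE \<and> K_infinite_dim K scF \<and> AX = Cb X \<and> AY = Cb Y)
       \<or> (\<exists>mX mY. mcomplete_of mX \<and> mcomplete_of mY \<and> X = mtopology_of mX \<and> Y = mtopology_of mY \<and>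
                  AX = Cbu mX \<and> AY = Cbu mY)"
    and ZE: "centralizer_one_dim K scE" and ZF: "centralizer_one_dim K scF"
    and T_maps: "\<forall>f\<in>AX. T f \<in> AY" and T_surj: "T ` AX = AY"
    and T_add: "\<forall>f\<in>AX. \<forall>g\<in>AX. T (\<lambda>x. f x + g x) = (\<lambda>y. T f y + T g y)"
    and T_hom: "\<forall>a\<in>K. \<forall>f\<in>AX. T (\<lambda>x. scE a (f x)) = (\<lambda>y. scF a (T f y))"
    and T_isom: "\<forall>f\<in>AX. supnorm Y (T f) = supnorm X f"
  shows "biseparating X Y AX AY T"
proof -
  have KE: "KBan K scE" by (rule KBan.intro[OF E K])
  have KF: "KBan K scF" by (rule KBan.intro[OF F K])
  have FS2: "FS K scE X AX \<and> FS K scF Y AY"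
    using situation
  proof
    assume "completely_regular_space X \<and> realcompact X \<and> completely_regular_space Y \<and> realcompact Y \<and>
        K_infinite_dim K scE \<and> K_infinite_dim K scF \<and> AX = Cb X \<and> AY = Cb Y"
    then have "AX = Cb X" "AY = Cb Y" by auto
    then show ?thesis using FS_Cb[OF KE, of X] FS_Cb[OF KF, of Y] by simp
  next
    assume "\<exists>mX mY. mcomplete_of mX \<and> mcomplete_of mY \<and> X = mtopology_of mX \<and> Y = mtopology_of mY \<and>
                  AX = Cbu mX \<and> AY = Cbu mY"
    then obtain mX mY where "X = mtopology_of mX" "Y = mtopology_of mY" "AX = Cbu mX" "AY = Cbu mY" by blast
    then show ?thesis using FS_Cbu[OF KE, of mX] FS_Cbu[OF KF, of mY] by simp
  qed
  have FA: "FS K scE X AX" and FB: "FS K scF Y AY" using FS2 by auto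
  have Tm: "\<And>f. f \<in> AX \<Longrightarrow> T f \<in> AY" using T_maps by blast
  have Tadd: "\<And>f g. f \<in> AX \<Longrightarrow> g \<in> AX \<Longrightarrow> T (\<lambda>x. f x + g x) = (\<lambda>y. T f y + T g y)" using T_add by blast
  have Thom: "\<And>a f. a \<in> K \<Longrightarrow> f \<in> AX \<Longrightarrow> T (\<lambda>x. scE a (f x)) = (\<lambda>y. scF a (T f y))" using T_hom by blast
  have Tiso: "\<And>f. f \<in> AX \<Longrightarrow> supnorm Y (T f) = supnorm X f" using T_isom by blast
  note IF = inv_facts[OF FA FB Tm T_surj Tadd Thom Tiso]
  define Ti where "Ti = inv_into AX T"
  have inj: "inj_on T AX" using IF by blast
  have Tim: "\<And>u. u \<in> AY \<Longrightarrow> Ti u \<in> AX" using IF unfolding Ti_def by blast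
  have Tis: "Ti ` AY = AX" using IF unfolding Ti_def by blast
  have Tiadd: "\<And>u v. u \<in> AY \<Longrightarrow> v \<in> AY \<Longrightarrow> Ti (\<lambda>y. u y + v y) = (\<lambda>x. Ti u x + Ti v x)"
    using IF unfolding Ti_def by blast
  have Tihom: "\<And>a u. a \<in> K \<Longrightarrow> u \<in> AY \<Longrightarrow> Ti (\<lambda>y. scF a (u y)) = (\<lambda>x. scE a (Ti u x))"
    using IF unfolding Ti_def by blast
  have Tiiso: "\<And>u. u \<in> AY \<Longrightarrow> supnorm X (Ti u) = supnorm Y u" using IF unfolding Ti_def by blast
  have s1: "separating X Y AX T" unfolding separating_def
    using T_add main_sep[OF FA FB ZF Tm T_surj Tadd Thom Tiso] by blast
  have s2: "separating Y X AY Ti" unfolding separating_def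
    using Tiadd main_sep[OF FB FA ZE Tim Tis Tiadd Tihom Tiiso] by blast
  show ?thesis unfolding biseparating_def bij_betw_def Ti_def[symmetric] using inj T_surj s1 s2 by blast
qed


end
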